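(* Let $N\ge2$, $R>0$, let $g:[0,R]\to(0,\infty)$ be smooth, let $A,B,p,q$ be positive constants with $0<A<B$, and let $\kappa\in(0,1)$, all independent of $\epsilon$. For $\epsilon>0$ let $U_\epsilon$ be the unique solution of problem (N* ) described in the context, and let $\widetilde M=\sqrt{\frac{A(p+q)}{\max_{[0,R]}g}(\frac qp)^{\frac{p-q}{p+q}}}$. Then there are positive constants $\widetilde C_1,\widetilde C_2,\widetilde C_3$ independent of $\epsilon$ such that for all sufficiently small $\epsilon>0$, $$\int_{\epsilon^\kappa}^{R-\epsilon^\kappa}\frac1sU_\epsilon'(s)^2ds\le\widetilde C_1e^{-\frac{\widetilde M}{2\epsilon^{1-\kappa}}},\qquad \int_{R-\epsilon^\kappa}^RU_\epsilon'(s)^2ds\le\frac{\widetilde C_2}{\widetilde M\epsilon^3},$$ and $|\Lambda_{i,\epsilon}(R)|\le \widetilde C_3/\epsilon$ for $i=1,2$, where $$\Lambda_{1,\epsilon}(R)=\frac{\epsilon^2}{2}\int_0^R\frac{(N-2)g(s)+sg'(s)}{R^N}s^{N-1}U_\epsilon'(s)^2ds,$$ $$\Lambda_{2,\epsilon}(R)=-\frac{\epsilon^2}{2}g(\epsilon^\kappa)U_\epsilon'(\epsilon^\kappa)^2+\frac{\epsilon^2}{2}\int_{\epsilon^\kappa}^R\frac{2(N-1)g(s)+sg'(s)}{s}U_\epsilon'(s)^2ds.$$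
   Context: Problem (N* ): for $\epsilon>0$, find $U_\epsilon\in C^1([0,R])\cap C^\infty((0,R))$ such that for $r\in(0,R)$ $$\epsilon^2 g(r)\Big[U_\epsilon''(r)+\Big(\frac{N-1}{r}+\frac{g'(r)}{g(r)}\Big)U_\epsilon'(r)\Big]=\frac{R^N}{N}\Big(\frac{Ae^{pU_\epsilon(r)}}{\int_0^R s^{N-1}e^{pU_\epsilon(s)}ds}-\frac{Be^{-qU_\epsilon(r)}}{\int_0^R s^{N-1}e^{-qU_\epsilon(s)}ds}\Big),$$ together with $\int_0^R s^{N-1}U_\epsilon(s)\,ds=0$, $U_\epsilon'(0)=0$ and $U_\epsilon'(R)=\frac{R(A-B)}{\epsilon^2Ng(R)}$; it has a unique solution. *)

theory Defs
  imports "HOL-Analysis.Analysis"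
begin

definition C_inf_on :: "real set \<Rightarrow> (real \<Rightarrow> real) \<Rightarrow> bool" where
  "C_inf_on S f \<longleftrightarrow> (\<forall>k::nat. \<forall>x\<in>S. ((deriv ^^ k) f) differentiable (at x))"

definition smooth_on_closed :: "real \<Rightarrow> (real \<Rightarrow> real) \<Rightarrow> bool" where
  "smooth_on_closed R g \<longleftrightarrow> (\<exists>T. open T \<and> {0..R} \<subseteq> T \<and> C_inf_on T g)"

definition solves_Nstar ::
  "nat \<Rightarrow> real \<Rightarrow> (real \<Rightarrow> real) \<Rightarrow> real \<Rightarrow> real \<Rightarrow> real \<Rightarrow> real \<Rightarrow> real \<Rightarrow> (real \<Rightarrow> real) \<Rightarrow> bool"
  where
  "solves_Nstar N R g A B p q \<epsilon> U \<longleftrightarrow>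
     (\<exists>U'. (\<forall>r\<in>{0..R}. (U has_real_derivative U' r) (at r within {0..R}))
         \<and> continuous_on {0..R} U'
         \<and> U' 0 = 0
         \<and> U' R = R * (A - B) / (\<epsilon>\<^sup>2 * real N * g R))
   \<and> C_inf_on {0<..<R} U
   \<and> (\<forall>r\<in>{0<..<R}.
        \<epsilon>\<^sup>2 * g r * (deriv (deriv U) r + ((real N - 1) / r + deriv g r / g r) * deriv U r)
        = R ^ N / real N *
          (A * exp (p * U r) / integral {0..R} (\<lambda>s. s ^ (N - 1) * exp (p * U s))
           - B * exp (- q * U r) / integral {0..R} (\<lambda>s. s ^ (N - 1) * exp (- q * U s))))
   \<and> integral {0..R} (\<lambda>s. s ^ (N - 1) * U s) = 0"

end

theory Submission
  imports Defs "HOL-Analysis.Analysis"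
begin


lemma mono_from_deriv:
  fixes f f' :: "real \<Rightarrow> real"
  assumes "a \<le> b" "continuous_on {a..b} f"
    "\<And>x. a < x \<Longrightarrow> x < b \<Longrightarrow> (f has_real_derivative f' x) (at x)"
    "\<And>x. a < x \<Longrightarrow> x < b \<Longrightarrow> f' x \<ge> 0"
  shows "f a \<le> f b"
  using DERIV_nonneg_imp_increasing_open[of a b f] assms by blast

locale nst =
  fixes N :: nat and R A B p q \<epsilon> :: real and g g' u u' u'' :: "real \<Rightarrow> real"
  assumes N2: "N \<ge> 2" and Rpos: "R > 0" and Apos: "A > 0" and AB: "A < B"
    and ppos: "p > 0" and qpos: "q > 0" and eps: "\<epsilon> > 0"
    and gpos: "\<And>r. r \<in> {0..R} \<Longrightarrow> g r > 0"
    and gder: "\<And>r. r \<in> {0..R} \<Longrightarrow> (g has_real_derivative g' r) (at r)"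
    and uder: "\<And>r. r \<in> {0..R} \<Longrightarrow> (u has_real_derivative u' r) (at r within {0..R})"
    and u'cont: "continuous_on {0..R} u'"
    and u'0: "u' 0 = 0" and u'R: "u' R = R * (A - B) / (\<epsilon>\<^sup>2 * real N * g R)"
    and u''der: "\<And>r. r \<in> {0<..<R} \<Longrightarrow> (u' has_real_derivative u'' r) (at r)"
    and ode: "\<And>r. r \<in> {0<..<R} \<Longrightarrow>
        \<epsilon>\<^sup>2 * g r * (u'' r + ((real N - 1) / r + g' r / g r) * u' r)
        = R ^ N / real N *
          (A * exp (p * u r) / integral {0..R} (\<lambda>s. s ^ (N - 1) * exp (p * u s))
           - B * exp (- q * u r) / integral {0..R} (\<lambda>s. s ^ (N - 1) * exp (- q * u s)))"
begin

definition "I1 = integral {0..R} (\<lambda>s. s ^ (N - 1) * exp (p * u s))"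
definition "I2 = integral {0..R} (\<lambda>s. s ^ (N - 1) * exp (- q * u s))"
definition "a = R ^ N / real N * A / I1"
definition "b = R ^ N / real N * B / I2"
definition "G r = a * exp (p * u r) - b * exp (- q * u r)" for r
definition "k r = p * a * exp (p * u r) + q * b * exp (- q * u r)" for r
definition "v r = r ^ (N - 1) * g r * u' r" for r

lemma ucont: "continuous_on {0..R} u"
  using uder by (meson continuous_on_eq_continuous_within DERIV_continuous)  

lemma gcont: "continuous_on {0..R} g"
  using gder by (meson DERIV_isCont continuous_at_imp_continuous_on)

lemma uder_at: "r \<in> {0<..<R} \<Longrightarrow> (u has_real_derivative u' r) (at r)"
  using uder[of r] at_within_Icc_at[of 0 r R] by auto

lemma int_pow: "((\<lambda>s. s ^ (N - 1)) has_integral (R ^ N / real N)) {0..R}"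
proof -
  have "((\<lambda>s. s ^ (N - 1)) has_integral ((\<lambda>s. s ^ N / real N) R - (\<lambda>s. s ^ N / real N) 0)) {0..R}"
    apply (rule fundamental_theorem_of_calculus)
    using Rpos apply simp
    using N2
    apply (auto intro!: derivative_eq_intros simp: has_real_derivative_iff_has_vector_derivative[symmetric])
    done
  then show ?thesis using N2 by (simp add: power_0_left)
qed

lemma u'der_at: "r \<in> {0<..<R} \<Longrightarrow> (u' has_real_derivative u'' r) (at r)"
  using u''der by auto

lemma gcont_at: "r \<in> {0..R} \<Longrightarrow> isCont g r"
  using gder DERIV_isCont by blast

lemma umin: "\<exists>m\<in>{0..R}. \<forall>x\<in>{0..R}. u m \<le> u x"
  using continuous_attains_inf[OF compact_Icc _ ucont] Rpos by auto
lemma umax: "\<exists>m\<in>{0..R}. \<forall>x\<in>{0..R}. u x \<le> u m"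
  using continuous_attains_sup[OF compact_Icc _ ucont] Rpos by auto

lemma int1: "(\<lambda>s. s ^ (N - 1) * exp (p * u s)) integrable_on {0..R}"
  by (rule integrable_continuous_interval) (auto intro!: continuous_intros ucont)
lemma int2: "(\<lambda>s. s ^ (N - 1) * exp (- q * u s)) integrable_on {0..R}"
  by (rule integrable_continuous_interval) (auto intro!: continuous_intros ucont)

lemma I1pos: "I1 > 0"
proof -
  obtain m where m: "m \<in> {0..R}" "\<forall>x\<in>{0..R}. u m \<le> u x" using umin by blast
  have "integral {0..R} (\<lambda>s. s ^ (N - 1) * exp (p * u m)) \<le> I1"
    unfolding I1_def
    apply (rule integral_le)
    using int_pow[THEN has_integral_mult_left, of "exp (p * u m)"] int1 m ppos
    by (auto intro!: mult_left_mono simp: has_integral_integrable integrable_on_def)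
  moreover have "integral {0..R} (\<lambda>s. s ^ (N - 1) * exp (p * u m)) = R ^ N / real N * exp (p * u m)"
    by (rule integral_unique, rule has_integral_mult_left[OF int_pow])
  moreover have "R ^ N / real N * exp (p * u m) > 0" using Rpos N2 by simp
  ultimately show ?thesis by linarith
qed

lemma I2pos: "I2 > 0"
proof -
  obtain m where m: "m \<in> {0..R}" "\<forall>x\<in>{0..R}. u x \<le> u m" using umax by blast
  have "integral {0..R} (\<lambda>s. s ^ (N - 1) * exp (- q * u m)) \<le> I2"
    unfolding I2_def
    apply (rule integral_le)
    using int_pow[THEN has_integral_mult_left, of "exp (- q * u m)"] int2 m qpos
    by (auto intro!: mult_left_mono simp: has_integral_integrable integrable_on_def)
  moreover have "integral {0..R} (\<lambda>s. s ^ (N - 1) * exp (- q * u m)) = R ^ N / real N * exp (- q * u m)"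
    by (rule integral_unique, rule has_integral_mult_left[OF int_pow])
  moreover have "R ^ N / real N * exp (- q * u m) > 0" using Rpos N2 by simp
  ultimately show ?thesis by linarith
qed

lemma apos: "a > 0" using I1pos Rpos N2 Apos by (simp add: a_def)
lemma bpos: "b > 0" using I2pos Rpos N2 Apos AB by (simp add: b_def)
lemma kpos: "k r > 0" using apos bpos ppos qpos by (simp add: k_def add_pos_pos)

lemma Gcont: "continuous_on {0..R} G"
  unfolding G_def by (auto intro!: continuous_intros ucont)
lemma vcont: "continuous_on {0..R} v"
  unfolding v_def by (auto intro!: continuous_intros gcont u'cont)
lemma v0: "v 0 = 0" using N2 by (simp add: v_def u'0)
lemma vR: "v R = - (R ^ N * (B - A) / (real N * \<epsilon>\<^sup>2))"
proof -
  have "R ^ (N - 1) * R = R ^ N" using N2 by (cases N) auto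
  moreover have "g R > 0" using gpos[of R] Rpos by auto
  ultimately show ?thesis using Rpos eps N2 unfolding v_def u'R
    by (simp add: field_simps power2_eq_square)
qed

lemma G_der: "r \<in> {0<..<R} \<Longrightarrow> (G has_real_derivative k r * u' r) (at r)"
proof -
  assume r: "r \<in> {0<..<R}"
  have d1: "((\<lambda>x. p * u x) has_real_derivative p * u' r) (at r)"
    using DERIV_cmult[OF uder_at[OF r]] .
  have d2: "((\<lambda>x. - q * u x) has_real_derivative - q * u' r) (at r)"
    using DERIV_cmult[OF uder_at[OF r]] .
  have "((\<lambda>x. a * exp (p * u x) - b * exp (- q * u x)) has_real_derivative
      a * (exp (p * u r) * (p * u' r)) - b * (exp (- q * u r) * (- q * u' r))) (at r)"
    by (rule DERIV_diff DERIV_cmult DERIV_fun_exp d1 d2)+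
  then show ?thesis unfolding G_def k_def by (rule DERIV_cong) (simp add: algebra_simps)
qed

definition "vd r = real (N - 1) * r ^ (N - 2) * g r * u' r + r ^ (N - 1) * g' r * u' r + r ^ (N - 1) * g r * u'' r" for r

lemma v_der: "r \<in> {0<..<R} \<Longrightarrow> (v has_real_derivative vd r) (at r)"
proof -
  assume r: "r \<in> {0<..<R}"
  have p: "((\<lambda>r. r ^ (N - 1)) has_real_derivative real (N - 1) * r ^ (N - 2)) (at r)"
    using DERIV_pow[of "N - 1" r] by (simp add: diff_diff_left numeral_2_eq_2)
  have gr: "r \<in> {0..R}" using r by auto
  have "((\<lambda>x. x ^ (N - 1) * g x * u' x) has_real_derivative vd r) (at r)"
    by (rule DERIV_cong[OF DERIV_mult[OF DERIV_mult[OF p gder[OF gr]] u'der_at[OF r]]]) (simp add: vd_def algebra_simps)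
  then show ?thesis unfolding v_def .
qed

lemma aux_alg: "(gg::real) > 0 \<Longrightarrow> P*(e*gg*(x + (t + g1/gg)*y)) = e*((P*t)*gg*y + P*g1*y + P*gg*x)"
  by (simp add: field_simps)

lemma vd_eq: "r \<in> {0<..<R} \<Longrightarrow> \<epsilon>\<^sup>2 * vd r = r ^ (N - 1) * G r"
proof -
  assume r: "r \<in> {0<..<R}"
  have rN: "r ^ (N - 1) = r * r ^ (N - 2)" using N2
    by (cases N; cases "N - 1") (auto simp: numeral_2_eq_2)
  have g: "g r > 0" using gpos r by auto
  have E1: "r ^ (N - 1) * (\<epsilon>\<^sup>2 * g r * (u'' r + ((real N - 1) / r + g' r / g r) * u' r)) = r ^ (N - 1) * G r"
  proof -
    have rhs: "R ^ N / real N * (A * exp (p * u r) / I1 - B * exp (- q * u r) / I2) = G r"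
      unfolding G_def a_def b_def by (simp add: right_diff_distrib)
    show ?thesis using ode[OF r] rhs unfolding I1_def[symmetric] I2_def[symmetric] by simp
  qed
  have E2: "r ^ (N - 1) * (\<epsilon>\<^sup>2 * g r * (u'' r + ((real N - 1) / r + g' r / g r) * u' r)) = \<epsilon>\<^sup>2 * vd r"
  proof -
    have "r ^ (N - 1) * ((real N - 1) / r) = real (N - 1) * r ^ (N - 2)"
      using r N2 unfolding rN by (simp add: of_nat_diff)
    then show ?thesis unfolding vd_def aux_alg[OF g] by (simp add: algebra_simps)
  qed
  show ?thesis using E1 E2 by metis
qed

lemma vd_sign: "r \<in> {0<..<R} \<Longrightarrow> vd r = r ^ (N - 1) * G r / \<epsilon>\<^sup>2"
  using vd_eq[of r] eps by (simp add: field_simps)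

lemma Gv_der: "r \<in> {0<..<R} \<Longrightarrow> ((\<lambda>x. G x * v x) has_real_derivative (k r * u' r * v r + G r * vd r)) (at r)"
  by (rule DERIV_cong[OF DERIV_mult[OF G_der v_der]]) auto

lemma Gv_der_nonneg: "r \<in> {0<..<R} \<Longrightarrow> k r * u' r * v r + G r * vd r \<ge> 0"
proof -
  assume r: "r \<in> {0<..<R}"
  have "k r * u' r * v r = k r * (r ^ (N - 1) * g r) * (u' r)\<^sup>2"
    unfolding v_def by (simp add: power2_eq_square)
  moreover have "k r * (r ^ (N - 1) * g r) * (u' r)\<^sup>2 \<ge> 0"
    using kpos[of r] gpos[of r] r by (auto intro!: mult_nonneg_nonneg)
  moreover have "G r * vd r = r ^ (N - 1) * (G r)\<^sup>2 / \<epsilon>\<^sup>2"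
    unfolding vd_sign[OF r] by (simp add: power2_eq_square)
  moreover have "r ^ (N - 1) * (G r)\<^sup>2 / \<epsilon>\<^sup>2 \<ge> 0" using r by auto
  ultimately show ?thesis by linarith
qed

lemma Gv_mono: "0 \<le> x \<Longrightarrow> x \<le> y \<Longrightarrow> y \<le> R \<Longrightarrow> G x * v x \<le> G y * v y"
  apply (rule mono_from_deriv[of x y _ "\<lambda>r. k r * u' r * v r + G r * vd r"])
     apply simp
    apply (rule continuous_on_subset[of "{0..R}"], auto intro!: continuous_intros Gcont vcont)[1]
  using Gv_der Gv_der_nonneg by auto

lemma Gv_nonneg: "r \<in> {0..R} \<Longrightarrow> G r * v r \<ge> 0"
  using Gv_mono[of 0 r] v0 by auto

lemma vR_neg: "v R < 0"
  unfolding vR using Rpos AB N2 eps by (auto intro!: divide_pos_pos)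

lemma G_nonpos: "r \<in> {0..R} \<Longrightarrow> G r \<le> 0"
proof (rule ccontr)
  assume r0: "r \<in> {0..R}" and "\<not> G r \<le> 0"
  then have Gr: "G r > 0" by simp
  have GR: "G R \<le> 0"
    using Gv_nonneg[of R] vR_neg Rpos by (auto simp: mult_le_0_iff zero_le_mult_iff)
  then have rR: "r < R" using Gr r0 by (cases "r = R") auto
  obtain r1 where r1: "r \<le> r1" "r1 \<le> R" "G r1 = 0"
    using IVT2'[of G R 0 r] GR Gr rR continuous_on_subset[OF Gcont, of "{r..R}"] r0 by auto
  have rr1: "r < r1" using r1 Gr by (cases "r = r1") auto
  obtain d where d: "d > 0" "\<forall>x'\<in>{0..R}. dist x' r < d \<longrightarrow> dist (G x') (G r) < G r"
    using Gcont r0 Gr unfolding continuous_on_iff by blast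
  define s1 where "s1 = min (r + d / 2) r1"
  have s1: "r < s1" "s1 \<le> r1" using d rr1 by (auto simp: s1_def)
  have Gpos: "G x > 0" if "r \<le> x" "x \<le> s1" for x
  proof -
    have "x \<in> {0..R}" "dist x r < d" using that r0 r1 s1 d by (auto simp: s1_def dist_real_def)
    then show ?thesis using d(2) by (auto simp: dist_real_def)
  qed
  have v0s: "v x = 0" if "r \<le> x" "x \<le> s1" for x
  proof -
    have "G x * v x \<ge> 0" using Gv_nonneg[of x] that r0 r1 s1 by auto
    moreover have "G x * v x \<le> G r1 * v r1" using Gv_mono[of x r1] that r0 r1 s1 by auto
    ultimately have "G x * v x = 0" using r1 by simp
    then show ?thesis using Gpos[OF that] by simp
  qed
  have cs: "continuous_on {r..s1} v" using continuous_on_subset[OF vcont, of "{r..s1}"] r0 r1 s1 by auto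
  have dif: "v differentiable (at x)" if "r < x" "x < s1" for x
    using v_der[of x] that r0 r1 s1 real_differentiable_def by fastforce
  obtain l z where z: "r < z" "z < s1" "DERIV v z :> l" "v s1 - v r = (s1 - r) * l"
    using MVT[OF s1(1) cs dif] by blast
  have zi: "z \<in> {0<..<R}" using z r0 r1 s1 by auto
  have "l = vd z" using DERIV_unique[OF z(3) v_der[OF zi]] .
  moreover have "vd z > 0" unfolding vd_sign[OF zi] using Gpos[of z] z zi eps by auto
  moreover have "v s1 - v r = 0" using v0s[of s1] v0s[of r] s1 by auto
  ultimately show False using z s1 by auto
qed

end

context nst begin

lemma v_nonpos: "r \<in> {0..R} \<Longrightarrow> v r \<le> 0"
proof -
  assume r: "r \<in> {0..R}"
  have "- v 0 \<le> - v r"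
    apply (rule mono_from_deriv[of 0 r "\<lambda>x. - v x" "\<lambda>x. - vd x"])
    using r apply simp
    subgoal using r by (intro continuous_intros continuous_on_subset[OF vcont]) auto
    subgoal for x using r DERIV_minus[OF v_der[of x]] by auto
    subgoal for x using r G_nonpos[of x] eps vd_sign[of x]
      by (auto simp: divide_nonpos_pos mult_nonneg_nonpos)
    done
  then show ?thesis using v0 by simp
qed

lemma u'_nonpos: "r \<in> {0..R} \<Longrightarrow> u' r \<le> 0"
proof (cases "r = 0")
  case True then show ?thesis using u'0 by simp
next
  case False
  assume r: "r \<in> {0..R}"
  then have "r ^ (N - 1) * g r > 0" using False gpos by auto
  moreover have "(r ^ (N - 1) * g r) * u' r \<le> 0" using v_nonpos[OF r] unfolding v_def by simp
  ultimately show ?thesis using mult_pos_pos[of "r ^ (N - 1) * g r" "u' r"] by linarith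
qed

lemma u_decr: "0 \<le> x \<Longrightarrow> x \<le> y \<Longrightarrow> y \<le> R \<Longrightarrow> u y \<le> u x"
proof -
  assume xy: "0 \<le> x" "x \<le> y" "y \<le> R"
  have "- u x \<le> - u y"
    apply (rule mono_from_deriv[of x y "\<lambda>x. - u x" "\<lambda>r. - u' r"])
    using xy apply simp
    subgoal using xy by (intro continuous_intros continuous_on_subset[OF ucont]) auto
    subgoal for r using xy DERIV_minus[OF uder_at[of r]] by auto
    using xy u'_nonpos by auto
  then show ?thesis by simp
qed

lemma G_decr: "0 \<le> x \<Longrightarrow> x \<le> y \<Longrightarrow> y \<le> R \<Longrightarrow> G y \<le> G x"
proof -
  assume xy: "0 \<le> x" "x \<le> y" "y \<le> R"
  have "- G x \<le> - G y"
    apply (rule mono_from_deriv[of x y "\<lambda>x. - G x" "\<lambda>r. - (k r * u' r)"])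
    using xy apply simp
    subgoal using xy by (intro continuous_intros continuous_on_subset[OF Gcont]) auto
    subgoal for r using xy DERIV_minus[OF G_der[of r]] by auto
    subgoal for r using xy u'_nonpos[of r] kpos[of r] by (auto simp: mult_le_0_iff)
    done
  then show ?thesis by simp
qed

lemma k_lower: "r \<in> {0..R} \<Longrightarrow> k r \<ge> q * A"
proof -
  assume r: "r \<in> {0..R}"
  have "I1 \<le> integral {0..R} (\<lambda>s. s ^ (N - 1) * exp (p * u 0))"
    unfolding I1_def
    apply (rule integral_le)
    using int_pow[THEN has_integral_mult_left, of "exp (p * u 0)"] int1 ppos u_decr[of 0]
    by (auto intro!: mult_left_mono simp: has_integral_integrable integrable_on_def)
  also have "integral {0..R} (\<lambda>s. s ^ (N - 1) * exp (p * u 0)) = R ^ N / real N * exp (p * u 0)"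
    by (rule integral_unique, rule has_integral_mult_left[OF int_pow])
  finally have I1le: "I1 \<le> R ^ N / real N * exp (p * u 0)" .
  have "A * I1 \<le> A * (R ^ N / real N * exp (p * u 0))"
    using mult_left_mono[OF I1le, of A] Apos by simp
  then have "A \<le> A * (R ^ N / real N * exp (p * u 0)) / I1" using I1pos by (simp only: le_divide_eq) simp
  also have "\<dots> = a * exp (p * u 0)" by (simp add: a_def)
  finally have "A \<le> a * exp (p * u 0)" .
  also have "a * exp (p * u 0) \<le> b * exp (- q * u 0)"
    using G_nonpos[of 0] Rpos unfolding G_def by auto
  also have "b * exp (- q * u 0) \<le> b * exp (- q * u r)"
    using u_decr[of 0 r] r bpos qpos by auto
  finally have "q * A \<le> q * (b * exp (- q * u r))" using qpos by simp
  also have "\<dots> \<le> k r" unfolding k_def using apos ppos by simp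
  finally show ?thesis .
qed

end

context nst begin

lemma pw_der: "((\<lambda>x. x ^ (N - 1)) has_real_derivative real (N - 1) * r ^ (N - 2)) (at r)"
  using DERIV_pow[of "N - 1" r] by (simp add: diff_diff_left numeral_2_eq_2)

lemma z_small:
  assumes r: "0 \<le> r" "r \<le> R / 2"
  shows "- v r \<le> r ^ N * (- G (R / 2) / \<epsilon>\<^sup>2)"
proof -
  define K where "K = - G (R / 2) / \<epsilon>\<^sup>2"
  have mo: "(r ^ (N - 1) * K) * 0 + v 0 \<le> (r ^ (N - 1) * K) * r + v r"
  proof (rule mono_from_deriv[of 0 r "\<lambda>t. (r ^ (N - 1) * K) * t + v t" "\<lambda>t. r ^ (N - 1) * K + vd t"])
    show "0 \<le> r" using r by simp
    show "continuous_on {0..r} (\<lambda>t. (r ^ (N - 1) * K) * t + v t)"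
      using r Rpos by (intro continuous_intros continuous_on_subset[OF vcont]) auto
  next
    fix t assume t: "0 < t" "t < r"
    then have ti: "t \<in> {0<..<R}" using r Rpos by auto
    show "((\<lambda>t. (r ^ (N - 1) * K) * t + v t) has_real_derivative r ^ (N - 1) * K + vd t) (at t)"
      by (rule DERIV_cong[OF DERIV_add[OF DERIV_cmult[OF DERIV_ident] v_der[OF ti]]]) simp
  next
    fix t assume t: "0 < t" "t < r"
    then have ti: "t \<in> {0<..<R}" using r Rpos by auto
    have G1: "- G t \<le> - G (R / 2)" using G_decr[of t "R/2"] t r by auto
    have G2: "0 \<le> - G t" using G_nonpos[of t] ti by auto
    have "t ^ (N - 1) * (- G t) \<le> r ^ (N - 1) * (- G (R / 2))"
      using t G1 G2 by (intro mult_mono power_mono) auto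
    then have "t ^ (N - 1) * (- G t) / \<epsilon>\<^sup>2 \<le> r ^ (N - 1) * K"
      unfolding K_def using eps by (simp add: divide_right_mono)
    then show "0 \<le> r ^ (N - 1) * K + vd t" unfolding vd_sign[OF ti] by simp
  qed
  have eq: "(r ^ (N - 1) * K) * r = r ^ N * K" using N2 by (cases N) (auto simp: algebra_simps)
  have "- v r \<le> r ^ N * K" using mo v0 eq by linarith
  then show ?thesis unfolding K_def .
qed

lemma K_bound: "(R / 4) * (R / 2) ^ (N - 1) * (- G (R / 2) / \<epsilon>\<^sup>2) \<le> - v (3 * R / 4)"
proof -
  define K where "K = - G (R / 2) / \<epsilon>\<^sup>2"
  have "(\<lambda>t. (- ((R / 2) ^ (N - 1) * K)) * t - v t) (R / 2) \<le> (\<lambda>t. (- ((R / 2) ^ (N - 1) * K)) * t - v t) (3 * R / 4)"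
  proof (rule mono_from_deriv[of "R / 2" "3 * R / 4" "\<lambda>t. (- ((R / 2) ^ (N - 1) * K)) * t - v t" "\<lambda>t. - ((R / 2) ^ (N - 1) * K) - vd t"])
    show "R / 2 \<le> 3 * R / 4" using Rpos by simp
    show "continuous_on {R / 2..3 * R / 4} (\<lambda>t. (- ((R / 2) ^ (N - 1) * K)) * t - v t)"
      using Rpos by (intro continuous_intros continuous_on_subset[OF vcont]) auto
  next
    fix t assume t: "R / 2 < t" "t < 3 * R / 4"
    then have ti: "t \<in> {0<..<R}" using Rpos by auto
    show "((\<lambda>t. (- ((R / 2) ^ (N - 1) * K)) * t - v t) has_real_derivative - ((R / 2) ^ (N - 1) * K) - vd t) (at t)"
      by (rule DERIV_cong[OF DERIV_diff[OF DERIV_cmult[OF DERIV_ident] v_der[OF ti]]]) simp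
  next
    fix t assume t: "R / 2 < t" "t < 3 * R / 4"
    then have ti: "t \<in> {0<..<R}" using Rpos by auto
    have G1: "- G (R / 2) \<le> - G t" using G_decr[of "R/2" t] t Rpos by auto
    have G2: "0 \<le> - G (R / 2)" using G_nonpos[of "R/2"] Rpos by auto
    have "(R / 2) ^ (N - 1) * (- G (R / 2)) \<le> t ^ (N - 1) * (- G t)"
      using t G1 G2 Rpos by (intro mult_mono power_mono) auto
    then have "(R / 2) ^ (N - 1) * K \<le> t ^ (N - 1) * (- G t) / \<epsilon>\<^sup>2"
      unfolding K_def using eps by (simp add: divide_right_mono)
    then show "0 \<le> - ((R / 2) ^ (N - 1) * K) - vd t" unfolding vd_sign[OF ti] by simp
  qed
  moreover have "v (R / 2) \<le> 0" using v_nonpos[of "R/2"] Rpos by auto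
  ultimately show ?thesis unfolding K_def by (simp add: algebra_simps)
qed


definition "H lam r = - (r ^ (N - 1) * G r) / \<epsilon>\<^sup>2 + lam * v r" for lam r
definition "Hd lam r = - (real (N - 1) * r ^ (N - 2) * G r + r ^ (N - 1) * (k r * u' r)) / \<epsilon>\<^sup>2 + lam * vd r" for lam r

lemma H_der: "r \<in> {0<..<R} \<Longrightarrow> (H lam has_real_derivative Hd lam r) (at r)"
proof -
  assume r: "r \<in> {0<..<R}"
  show ?thesis unfolding H_def[abs_def] Hd_def
    by (rule DERIV_cong[OF DERIV_add[OF DERIV_cdivide[OF DERIV_minus[OF DERIV_mult[OF pw_der G_der[OF r]]]] DERIV_cmult[OF v_der[OF r]]]])
       (simp add: algebra_simps)
qed

lemma H_cont: "continuous_on {0..R} (H lam)"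
  unfolding H_def[abs_def] using eps by (intro continuous_intros Gcont vcont) auto

lemma H0: "H lam 0 = 0" using N2 v0 by (simp add: H_def power_0_left)

context
  fixes lam gm :: real
  assumes lam: "lam > 0" and gm: "\<And>r. r \<in> {0..R} \<Longrightarrow> g r \<le> gm"
    and lamb: "lam\<^sup>2 * \<epsilon>\<^sup>2 * gm \<le> q * A"
begin

lemma Hd_plus: "r \<in> {0<..<R} \<Longrightarrow> Hd lam r + lam * H lam r \<ge> 0"
proof -
  assume r: "r \<in> {0<..<R}"
  have g: "g r > 0" using gpos r by auto
  have eq: "Hd lam r + lam * H lam r =
     (- real (N - 1) * r ^ (N - 2) * G r) / \<epsilon>\<^sup>2 + (- v r) * (k r / (g r * \<epsilon>\<^sup>2) - lam\<^sup>2)"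
    unfolding Hd_def H_def vd_sign[OF r] v_def using g eps
    by (simp add: field_simps power2_eq_square)
  have t1: "(- real (N - 1) * r ^ (N - 2) * G r) / \<epsilon>\<^sup>2 \<ge> 0"
  proof -
    have "real (N - 1) * r ^ (N - 2) * G r \<le> 0"
      using G_nonpos[of r] r by (intro mult_nonneg_nonpos) auto
    then show ?thesis using eps by (simp add: divide_nonpos_pos)
  qed
  have "lam\<^sup>2 \<le> q * A / (gm * \<epsilon>\<^sup>2)"
    using lamb g gm[of r] r eps by (simp add: le_divide_eq mult.commute mult.left_commute)
  also have "q * A / (gm * \<epsilon>\<^sup>2) \<le> k r / (gm * \<epsilon>\<^sup>2)"
    using k_lower[of r] r g gm[of r] eps by (auto intro!: divide_right_mono)
  also have "k r / (gm * \<epsilon>\<^sup>2) \<le> k r / (g r * \<epsilon>\<^sup>2)"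
    using kpos[of r] g gm[of r] r eps by (auto intro!: divide_left_mono)
  finally have t2: "(- v r) * (k r / (g r * \<epsilon>\<^sup>2) - lam\<^sup>2) \<ge> 0"
    using v_nonpos[of r] r by (intro mult_nonneg_nonneg) auto
  show ?thesis using eq t1 t2 by linarith
qed

lemma H_nonneg: "r \<in> {0..R} \<Longrightarrow> H lam r \<ge> 0"
proof -
  assume r: "r \<in> {0..R}"
  have "exp (lam * 0) * H lam 0 \<le> exp (lam * r) * H lam r"
  proof (rule mono_from_deriv[of 0 r "\<lambda>x. exp (lam * x) * H lam x" "\<lambda>x. exp (lam * x) * (Hd lam x + lam * H lam x)"])
    show "0 \<le> r" using r by simp
    show "continuous_on {0..r} (\<lambda>x. exp (lam * x) * H lam x)"
      using r by (intro continuous_intros continuous_on_subset[OF H_cont]) auto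
  next
    fix x assume x: "0 < x" "x < r"
    then have xi: "x \<in> {0<..<R}" using r by auto
    have e: "((\<lambda>x. exp (lam * x)) has_real_derivative exp (lam * x) * (lam * 1)) (at x)"
      by (rule DERIV_fun_exp[OF DERIV_cmult[OF DERIV_ident]])
    show "((\<lambda>x. exp (lam * x) * H lam x) has_real_derivative exp (lam * x) * (Hd lam x + lam * H lam x)) (at x)"
      by (rule DERIV_cong[OF DERIV_mult[OF e H_der[OF xi]]]) (simp add: algebra_simps)
  next
    fix x assume x: "0 < x" "x < r"
    then have xi: "x \<in> {0<..<R}" using r by auto
    show "0 \<le> exp (lam * x) * (Hd lam x + lam * H lam x)" using Hd_plus[OF xi] by simp
  qed
  then show ?thesis using H0 by (simp add: zero_le_mult_iff)
qed

lemma z_decay: "r \<in> {0..R} \<Longrightarrow> - v r \<le> exp (- lam * (R - r)) * (- v R)"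
proof -
  assume r: "r \<in> {0..R}"
  have "exp (- lam * r) * (- v r) \<le> exp (- lam * R) * (- v R)"
  proof (rule mono_from_deriv[of r R "\<lambda>x. exp (- lam * x) * (- v x)" "\<lambda>x. exp (- lam * x) * H lam x"])
    show "r \<le> R" using r by simp
    show "continuous_on {r..R} (\<lambda>x. exp (- lam * x) * (- v x))"
      using r by (intro continuous_intros continuous_on_subset[OF vcont]) auto
  next
    fix x assume x: "r < x" "x < R"
    then have xi: "x \<in> {0<..<R}" using r by auto
    have e: "((\<lambda>x. exp (- lam * x)) has_real_derivative exp (- lam * x) * (- lam * 1)) (at x)"
      by (rule DERIV_fun_exp[OF DERIV_cmult[OF DERIV_ident]])
    show "((\<lambda>x. exp (- lam * x) * (- v x)) has_real_derivative exp (- lam * x) * H lam x) (at x)"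
      by (rule DERIV_cong[OF DERIV_mult[OF e DERIV_minus[OF v_der[OF xi]]]])
         (simp add: H_def vd_sign[OF xi] algebra_simps)
  next
    fix x assume x: "r < x" "x < R"
    then have xi: "x \<in> {0..R}" using r by auto
    show "0 \<le> exp (- lam * x) * H lam x" using H_nonneg[OF xi] by simp
  qed
  then have "exp (lam * r) * (exp (- lam * r) * (- v r)) \<le> exp (lam * r) * (exp (- lam * R) * (- v R))"
    by (simp add: mult_left_mono)
  then show ?thesis by (simp add: mult.assoc[symmetric] exp_add[symmetric] algebra_simps)
qed

end

end

context nst begin

lemma u'_eq: "r \<in> {0<..R} \<Longrightarrow> \<bar>u' r\<bar> = (- v r) / (r ^ (N - 1) * g r)"
proof -
  assume r: "r \<in> {0<..R}"
  have pos: "r ^ (N - 1) * g r > 0" using r gpos[of r] by auto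
  have "u' r \<le> 0" using u'_nonpos[of r] r by auto
  then have "\<bar>u' r\<bar> = - u' r" by simp
  also have "\<dots> = (r ^ (N - 1) * g r) * (- u' r) / (r ^ (N - 1) * g r)"
    by (rule nonzero_mult_div_cancel_left[symmetric]) (use pos in \<open>metis less_irrefl\<close>)
  also have "\<dots> = (- v r) / (r ^ (N - 1) * g r)" unfolding v_def by simp
  finally show ?thesis .
qed

context
  fixes lam gm gmn :: real
  assumes lam: "lam > 0" and gm: "\<And>r. r \<in> {0..R} \<Longrightarrow> g r \<le> gm"
    and lamb: "lam\<^sup>2 * \<epsilon>\<^sup>2 * gm \<le> q * A"
    and gmn: "gmn > 0" "\<And>r. r \<in> {0..R} \<Longrightarrow> gmn \<le> g r"
begin

definition "D = (- v R) / (gmn * (R / 2) ^ (N - 1))"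

lemma D_nonneg: "D \<ge> 0"
  unfolding D_def using vR_neg gmn Rpos by (intro divide_nonneg_pos) auto

lemma ua: "r \<in> {R/2..R} \<Longrightarrow> \<bar>u' r\<bar> \<le> D * exp (- lam * (R - r))"
proof -
  assume r: "r \<in> {R/2..R}"
  have ri: "r \<in> {0<..R}" "r \<in> {0..R}" using r Rpos by auto
  have den: "gmn * (R / 2) ^ (N - 1) \<le> r ^ (N - 1) * g r"
    using r gmn(2)[OF ri(2)] gmn(1) Rpos by (subst mult.commute, intro mult_mono power_mono) auto
  have dpos: "gmn * (R / 2) ^ (N - 1) > 0" using gmn Rpos by auto
  have "\<bar>u' r\<bar> = (- v r) / (r ^ (N - 1) * g r)" using u'_eq[OF ri(1)] .
  also have "\<dots> \<le> (- v r) / (gmn * (R / 2) ^ (N - 1))"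
    using v_nonpos[OF ri(2)] den dpos by (intro divide_left_mono) auto
  also have "\<dots> \<le> (exp (- lam * (R - r)) * (- v R)) / (gmn * (R / 2) ^ (N - 1))"
    using z_decay[OF lam gm lamb ri(2)] dpos by (intro divide_right_mono) auto
  also have "\<dots> = D * exp (- lam * (R - r))" unfolding D_def by simp
  finally show ?thesis .
qed

lemma ub: "r \<in> {0..R/2} \<Longrightarrow> \<bar>u' r\<bar> \<le> 4 * D * exp (- lam * R / 4)"
proof (cases "r = 0")
  case True then show ?thesis using u'0 D_nonneg by simp
next
  case False
  assume r: "r \<in> {0..R/2}"
  have ri: "r \<in> {0<..R}" "r \<in> {0..R}" using r False Rpos by auto
  define K where "K = - G (R / 2) / \<epsilon>\<^sup>2"
  have K0: "K \<ge> 0" unfolding K_def using G_nonpos[of "R/2"] Rpos eps by (intro divide_nonneg_pos) auto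
  have rg: "r ^ (N - 1) * g r > 0" using ri gpos[of r] by auto
  have "\<bar>u' r\<bar> = (- v r) / (r ^ (N - 1) * g r)" using u'_eq[OF ri(1)] .
  also have "\<dots> \<le> (r ^ N * K) / (r ^ (N - 1) * g r)"
    using z_small[of r] r rg unfolding K_def by (intro divide_right_mono) auto
  also have "\<dots> = r * K / g r"
  proof -
    have "r ^ N = r * r ^ (N - 1)" using N2 by (cases N) auto
    then show ?thesis using rg ri by (simp add: field_simps)
  qed
  also have "\<dots> \<le> R * K / gmn"
    using r K0 gmn(1) gmn(2)[OF ri(2)] ri Rpos
    by (intro frac_le mult_right_mono mult_nonneg_nonneg) auto
  also have "\<dots> \<le> R * ((exp (- lam * (R - 3 * R / 4)) * (- v R)) / ((R / 4) * (R / 2) ^ (N - 1))) / gmn"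
  proof -
    have pos: "(R / 4) * (R / 2) ^ (N - 1) > 0" using Rpos by auto
    have "K \<le> (- v (3 * R / 4)) / ((R / 4) * (R / 2) ^ (N - 1))"
      using K_bound[folded K_def] by (subst pos_le_divide_eq[OF pos]) (simp add: mult_ac)
    also have "\<dots> \<le> (exp (- lam * (R - 3 * R / 4)) * (- v R)) / ((R / 4) * (R / 2) ^ (N - 1))"
      using z_decay[OF lam gm lamb, of "3 * R / 4"] Rpos pos by (intro divide_right_mono) auto
    finally show ?thesis using Rpos gmn(1) by (intro divide_right_mono mult_left_mono) auto
  qed
  also have "\<dots> = 4 * D * exp (- lam * R / 4)"
    unfolding D_def using Rpos gmn(1) by (simp add: field_simps)
  finally show ?thesis .
qed

end
end


lemma exp_int:
  fixes a b R lam :: real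
  assumes lam: "lam > 0" and ab: "a \<le> b" "b \<le> R"
  shows "integral {a..b} (\<lambda>s. exp (- 2 * lam * (R - s))) \<le> 1 / (2 * lam)"
proof -
  have "((\<lambda>s. exp (- 2 * lam * (R - s))) has_integral
      ((\<lambda>s. exp (- 2 * lam * (R - s)) / (2 * lam)) b - (\<lambda>s. exp (- 2 * lam * (R - s)) / (2 * lam)) a)) {a..b}"
    apply (rule fundamental_theorem_of_calculus[OF ab(1)])
    unfolding has_real_derivative_iff_has_vector_derivative[symmetric]
    using lam by (auto intro!: derivative_eq_intros)
  then have "integral {a..b} (\<lambda>s. exp (- 2 * lam * (R - s))) = exp (- 2 * lam * (R - b)) / (2 * lam) - exp (- 2 * lam * (R - a)) / (2 * lam)"
    by (simp add: integral_unique)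
  also have "\<dots> \<le> exp (- 2 * lam * (R - b)) / (2 * lam)" using lam by simp
  also have "\<dots> \<le> 1 / (2 * lam)" using lam ab by (intro divide_right_mono) auto
  finally show ?thesis .
qed

context nst begin
context
  fixes lam gm gmn :: real
  assumes lam: "lam > 0" and gm: "\<And>r. r \<in> {0..R} \<Longrightarrow> g r \<le> gm"
    and lamb: "lam\<^sup>2 * \<epsilon>\<^sup>2 * gm \<le> q * A"
    and gmn: "gmn > 0" "\<And>r. r \<in> {0..R} \<Longrightarrow> gmn \<le> g r"
begin

abbreviation "DD \<equiv> D gmn"

lemma sq_a: "r \<in> {R/2..R} \<Longrightarrow> (u' r)\<^sup>2 \<le> DD\<^sup>2 * exp (- 2 * lam * (R - r))"
proof -
  assume r: "r \<in> {R/2..R}"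
  have "(u' r)\<^sup>2 = \<bar>u' r\<bar>\<^sup>2" by simp
  also have "\<dots> \<le> (DD * exp (- lam * (R - r)))\<^sup>2"
    using ua[OF lam gm lamb gmn r] by (intro power_mono) auto
  also have "\<dots> = DD\<^sup>2 * exp (- 2 * lam * (R - r))"
    by (simp add: power_mult_distrib power2_eq_square exp_add[symmetric])
  finally show ?thesis .
qed

lemma sq_b: "r \<in> {0..R/2} \<Longrightarrow> (u' r)\<^sup>2 \<le> 16 * DD\<^sup>2 * exp (- lam * R / 2)"
proof -
  assume r: "r \<in> {0..R/2}"
  have "(u' r)\<^sup>2 = \<bar>u' r\<bar>\<^sup>2" by simp
  also have "\<dots> \<le> (4 * DD * exp (- lam * R / 4))\<^sup>2"
    using ub[OF lam gm lamb gmn r] by (intro power_mono) auto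
  also have "\<dots> = 16 * DD\<^sup>2 * exp (- lam * R / 2)"
    by (simp add: power_mult_distrib power2_eq_square exp_add[symmetric])
  finally show ?thesis .
qed

lemma sq_all: "r \<in> {0..R} \<Longrightarrow> (u' r)\<^sup>2 \<le> 16 * DD\<^sup>2 * exp (- lam * R / 2) + DD\<^sup>2 * exp (- 2 * lam * (R - r))"
proof (cases "r \<le> R / 2")
  case True
  assume "r \<in> {0..R}"
  then show ?thesis using sq_b[of r] True by (smt (verit) atLeastAtMost_iff exp_gt_zero mult_nonneg_nonneg zero_le_power2)
next
  case False
  assume "r \<in> {0..R}"
  then show ?thesis using sq_a[of r] False by (smt (verit) atLeastAtMost_iff exp_gt_zero mult_nonneg_nonneg zero_le_power2)
qed

lemma u'sq_int: "{lo..hi} \<subseteq> {0..R} \<Longrightarrow> (\<lambda>s. (u' s)\<^sup>2) integrable_on {lo..hi}"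
  by (rule integrable_continuous_interval) (auto intro!: continuous_intros continuous_on_subset[OF u'cont])

lemma E_total:
  assumes "0 \<le> lo" "lo \<le> hi" "hi \<le> R"
  shows "integral {lo..hi} (\<lambda>s. (u' s)\<^sup>2) \<le> 16 * DD\<^sup>2 * exp (- lam * R / 2) * R + DD\<^sup>2 / (2 * lam)"
proof -
  let ?c = "16 * DD\<^sup>2 * exp (- lam * R / 2)"
  have i2: "(\<lambda>s. exp (- 2 * lam * (R - s))) integrable_on {lo..hi}"
    by (rule integrable_continuous_interval) (auto intro!: continuous_intros)
  have "integral {lo..hi} (\<lambda>s. (u' s)\<^sup>2) \<le> integral {lo..hi} (\<lambda>s. ?c + DD\<^sup>2 * exp (- 2 * lam * (R - s)))"
  proof (rule integral_le)
    show "(\<lambda>s. (u' s)\<^sup>2) integrable_on {lo..hi}" using assms by (intro u'sq_int) auto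
    show "(\<lambda>s. ?c + DD\<^sup>2 * exp (- 2 * lam * (R - s))) integrable_on {lo..hi}"
      by (rule integrable_continuous_interval) (auto intro!: continuous_intros)
  qed (use sq_all assms in auto)
  also have "\<dots> = integral {lo..hi} (\<lambda>s. ?c) + integral {lo..hi} (\<lambda>s. DD\<^sup>2 * exp (- 2 * lam * (R - s)))"
    by (rule integral_add) (auto intro!: integrable_continuous_interval continuous_intros)
  also have "\<dots> = ?c * (hi - lo) + DD\<^sup>2 * integral {lo..hi} (\<lambda>s. exp (- 2 * lam * (R - s)))"
    using assms by simp
  also have "\<dots> \<le> ?c * R + DD\<^sup>2 * (1 / (2 * lam))"
    using assms exp_int[OF lam assms(2,3)]
    by (intro add_mono mult_left_mono) auto
  finally show ?thesis by simp
qed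

lemma E_right:
  assumes "R / 2 \<le> lo" "lo \<le> R"
  shows "integral {lo..R} (\<lambda>s. (u' s)\<^sup>2) \<le> DD\<^sup>2 / (2 * lam)"
proof -
  have i2: "(\<lambda>s. exp (- 2 * lam * (R - s))) integrable_on {lo..R}"
    by (rule integrable_continuous_interval) (auto intro!: continuous_intros)
  have "integral {lo..R} (\<lambda>s. (u' s)\<^sup>2) \<le> integral {lo..R} (\<lambda>s. DD\<^sup>2 * exp (- 2 * lam * (R - s)))"
  proof (rule integral_le)
    show "(\<lambda>s. (u' s)\<^sup>2) integrable_on {lo..R}" using assms Rpos by (intro u'sq_int) auto
    show "(\<lambda>s. DD\<^sup>2 * exp (- 2 * lam * (R - s))) integrable_on {lo..R}"
      by (rule integrable_continuous_interval) (auto intro!: continuous_intros)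
  qed (use sq_a assms in auto)
  also have "\<dots> = DD\<^sup>2 * integral {lo..R} (\<lambda>s. exp (- 2 * lam * (R - s)))"
    by simp
  also have "\<dots> \<le> DD\<^sup>2 * (1 / (2 * lam))"
    using assms exp_int[OF lam assms(2) order_refl] by (intro mult_left_mono) auto
  finally show ?thesis by simp
qed

end
end


context nst begin
context
  fixes lam gm gmn :: real
  assumes lam: "lam > 0" and gm: "\<And>r. r \<in> {0..R} \<Longrightarrow> g r \<le> gm"
    and lamb: "lam\<^sup>2 * \<epsilon>\<^sup>2 * gm \<le> q * A"
    and gmn: "gmn > 0" "\<And>r. r \<in> {0..R} \<Longrightarrow> gmn \<le> g r"
begin

lemma E_1:
  assumes e: "0 < e" "e \<le> R / 4"
  shows "integral {e..R - e} (\<lambda>s. 1 / s * (u' s)\<^sup>2) \<le> R * (16 * (D gmn)\<^sup>2 * exp (- 2 * lam * e) / e)"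
proof -
  let ?c = "16 * (D gmn)\<^sup>2 * exp (- 2 * lam * e) / e"
  have pt: "1 / s * (u' s)\<^sup>2 \<le> ?c" if s: "s \<in> {e..R - e}" for s
  proof -
    have sq: "(u' s)\<^sup>2 \<le> 16 * (D gmn)\<^sup>2 * exp (- 2 * lam * e)"
    proof (cases "s \<le> R / 2")
      case True
      have "(u' s)\<^sup>2 \<le> 16 * (D gmn)\<^sup>2 * exp (- lam * R / 2)"
        using sq_b[OF lam gm lamb gmn, of s] True s e by auto
      also have "\<dots> \<le> 16 * (D gmn)\<^sup>2 * exp (- 2 * lam * e)"
        using e lam by (intro mult_left_mono) (auto simp: mult_le_cancel_left_pos)
      finally show ?thesis .
    next
      case False
      have "(u' s)\<^sup>2 \<le> (D gmn)\<^sup>2 * exp (- 2 * lam * (R - s))"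
        using sq_a[OF lam gm lamb gmn, of s] False s e by auto
      also have "\<dots> \<le> (D gmn)\<^sup>2 * exp (- 2 * lam * e)"
        using e lam s by (intro mult_left_mono) (auto simp: mult_le_cancel_left_pos)
      also have "\<dots> \<le> 16 * (D gmn)\<^sup>2 * exp (- 2 * lam * e)" by simp
      finally show ?thesis .
    qed
    have "1 / s * (u' s)\<^sup>2 \<le> 1 / e * (16 * (D gmn)\<^sup>2 * exp (- 2 * lam * e))"
      using s e sq by (intro mult_mono divide_left_mono) auto
    then show ?thesis by simp
  qed
  have "integral {e..R - e} (\<lambda>s. 1 / s * (u' s)\<^sup>2) \<le> integral {e..R - e} (\<lambda>s. ?c)"
  proof (rule integral_le)
    show "(\<lambda>s. 1 / s * (u' s)\<^sup>2) integrable_on {e..R - e}"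
      using e by (intro integrable_continuous_interval continuous_intros continuous_on_subset[OF u'cont]) auto
  qed (use pt in auto)
  also have "\<dots> = ?c * (R - e - e)" using e Rpos by simp
  also have "\<dots> \<le> ?c * R" using e by (intro mult_left_mono) auto
  finally show ?thesis by (simp add: mult.commute)
qed

lemma E_L2:
  assumes e: "0 < e" "e \<le> R / 2"
    and w: "continuous_on {0..R} w" "\<And>s. s \<in> {0..R} \<Longrightarrow> \<bar>w s\<bar> \<le> Wm"
  shows "\<bar>integral {e..R} (\<lambda>s. w s / s * (u' s)\<^sup>2)\<bar>
      \<le> Wm * (16 * (D gmn)\<^sup>2 * exp (- lam * R / 2) / e * R + 2 / R * ((D gmn)\<^sup>2 / (2 * lam)))"
proof -
  let ?c = "16 * (D gmn)\<^sup>2 * exp (- lam * R / 2) / e"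
  have Wm: "Wm \<ge> 0" using w(2)[of 0] Rpos by auto
  have pt: "norm (w s / s * (u' s)\<^sup>2) \<le> Wm * (?c + 2 / R * ((D gmn)\<^sup>2 * exp (- 2 * lam * (R - s))))"
    if s: "s \<in> {e..R}" for s
  proof -
    have si: "s \<in> {0..R}" using s e by auto
    have s0: "s > 0" using s e by auto
    have q: "(u' s)\<^sup>2 / s \<le> ?c + 2 / R * ((D gmn)\<^sup>2 * exp (- 2 * lam * (R - s)))"
    proof (cases "s \<le> R / 2")
      case True
      have "(u' s)\<^sup>2 / s \<le> (16 * (D gmn)\<^sup>2 * exp (- lam * R / 2)) / e"
        using sq_b[OF lam gm lamb gmn, of s] True s e
        by (intro frac_le) auto
      moreover have "0 \<le> 2 / R * ((D gmn)\<^sup>2 * exp (- 2 * lam * (R - s)))" using Rpos by auto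
      ultimately show ?thesis by linarith
    next
      case False
      have "(u' s)\<^sup>2 / s \<le> ((D gmn)\<^sup>2 * exp (- 2 * lam * (R - s))) / (R / 2)"
        using sq_a[OF lam gm lamb gmn, of s] False s e Rpos
        by (intro frac_le) auto
      moreover have "0 \<le> ?c" using e by auto
      ultimately show ?thesis by (simp add: field_simps)
    qed
    have "norm (w s / s * (u' s)\<^sup>2) = \<bar>w s\<bar> * ((u' s)\<^sup>2 / s)" using s0 by (simp add: abs_mult)
    also have "\<dots> \<le> Wm * ((u' s)\<^sup>2 / s)" using w(2)[OF si] s0 by (intro mult_right_mono) auto
    also have "\<dots> \<le> Wm * (?c + 2 / R * ((D gmn)\<^sup>2 * exp (- 2 * lam * (R - s))))"
      using q Wm by (intro mult_left_mono) auto
    finally show ?thesis .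
  qed
  have "norm (integral {e..R} (\<lambda>s. w s / s * (u' s)\<^sup>2))
     \<le> integral {e..R} (\<lambda>s. Wm * (?c + 2 / R * ((D gmn)\<^sup>2 * exp (- 2 * lam * (R - s)))))"
  proof (rule integral_norm_bound_integral)
    show "(\<lambda>s. w s / s * (u' s)\<^sup>2) integrable_on {e..R}"
      using e by (intro integrable_continuous_interval continuous_intros continuous_on_subset[OF u'cont]
          continuous_on_subset[OF w(1)]) auto
    show "(\<lambda>s. Wm * (?c + 2 / R * ((D gmn)\<^sup>2 * exp (- 2 * lam * (R - s))))) integrable_on {e..R}"
      by (intro integrable_continuous_interval continuous_intros)
  qed (use pt in auto)
  also have "\<dots> = Wm * (integral {e..R} (\<lambda>s. ?c) + 2 / R * ((D gmn)\<^sup>2 * integral {e..R} (\<lambda>s. exp (- 2 * lam * (R - s)))))"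
  proof -
    have i1: "(\<lambda>s. ?c) integrable_on {e..R}" by (rule integrable_const_ivl)
    have i2: "(\<lambda>s. 2 / R * ((D gmn)\<^sup>2 * exp (- 2 * lam * (R - s)))) integrable_on {e..R}"
      by (intro integrable_continuous_interval continuous_intros)
    show ?thesis using integral_add[OF i1 i2] by simp
  qed
  also have "\<dots> \<le> Wm * (?c * R + 2 / R * ((D gmn)\<^sup>2 * (1 / (2 * lam))))"
  proof -
    have c0: "?c \<ge> 0" using e by auto
    have "integral {e..R} (\<lambda>s. ?c) = ?c * (R - e)" using e by simp
    also have "\<dots> \<le> ?c * R" using c0 e by (intro mult_left_mono) auto
    finally have ic: "integral {e..R} (\<lambda>s. ?c) \<le> ?c * R" .
    show ?thesis
      using e Rpos Wm exp_int[OF lam, of e R R] ic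
      by (intro mult_left_mono add_mono mult_left_mono) auto
  qed
  finally show ?thesis by simp
qed

lemma E_L1:
  assumes w: "continuous_on {0..R} w" "\<And>s. s \<in> {0..R} \<Longrightarrow> \<bar>w s\<bar> \<le> Wm"
  shows "\<bar>integral {0..R} (\<lambda>s. w s * s ^ (N - 1) * (u' s)\<^sup>2)\<bar>
      \<le> Wm * R ^ (N - 1) * (16 * (D gmn)\<^sup>2 * exp (- lam * R / 2) * R + (D gmn)\<^sup>2 / (2 * lam))"
proof -
  have Wm: "Wm \<ge> 0" using w(2)[of 0] Rpos by auto
  have "norm (integral {0..R} (\<lambda>s. w s * s ^ (N - 1) * (u' s)\<^sup>2))
     \<le> integral {0..R} (\<lambda>s. (Wm * R ^ (N - 1)) * (u' s)\<^sup>2)"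
  proof (rule integral_norm_bound_integral)
    show "(\<lambda>s. w s * s ^ (N - 1) * (u' s)\<^sup>2) integrable_on {0..R}"
      by (intro integrable_continuous_interval continuous_intros u'cont w(1))
    show "(\<lambda>s. (Wm * R ^ (N - 1)) * (u' s)\<^sup>2) integrable_on {0..R}"
      by (intro integrable_continuous_interval continuous_intros u'cont)
  next
    fix s assume s: "s \<in> {0..R}"
    have "norm (w s * s ^ (N - 1) * (u' s)\<^sup>2) = \<bar>w s\<bar> * s ^ (N - 1) * (u' s)\<^sup>2"
      using s by (simp add: abs_mult)
    also have "\<dots> \<le> (Wm * R ^ (N - 1)) * (u' s)\<^sup>2"
      using w(2)[OF s] s Wm by (intro mult_right_mono mult_mono power_mono) auto
    finally show "norm (w s * s ^ (N - 1) * (u' s)\<^sup>2) \<le> (Wm * R ^ (N - 1)) * (u' s)\<^sup>2" .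
  qed
  also have "\<dots> = (Wm * R ^ (N - 1)) * integral {0..R} (\<lambda>s. (u' s)\<^sup>2)" by simp
  also have "\<dots> \<le> (Wm * R ^ (N - 1)) * (16 * (D gmn)\<^sup>2 * exp (- lam * R / 2) * R + (D gmn)\<^sup>2 / (2 * lam))"
    using E_total[OF lam gm lamb gmn, of 0 R] Rpos Wm by (intro mult_left_mono) auto
  finally show ?thesis by simp
qed

end
end


lemma exp_neg_le_sq:
  fixes y :: real assumes y: "y > 0"
  shows "exp (- y) \<le> 4 / y\<^sup>2"
proof -
  have "(1 + y / real 2) ^ 2 \<le> exp y"
    using y by (intro exp_ge_one_plus_x_over_n_power_n) auto
  moreover have "y\<^sup>2 / 4 \<le> (1 + y / real 2) ^ 2" using y by (simp add: power2_eq_square field_simps)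
  ultimately have "y\<^sup>2 / 4 \<le> exp y" by linarith
  then have "y\<^sup>2 \<le> 4 * exp y" by simp
  then have "1 / exp y \<le> 4 / y\<^sup>2" using y by (simp add: field_simps)
  then show ?thesis by (simp add: exp_minus field_simps)
qed

lemma powr_exp_bound:
  fixes \<epsilon> \<kappa> \<delta> :: real and n :: nat
  assumes e: "0 < \<epsilon>" "\<epsilon> \<le> 1" and k: "0 < \<kappa>" "\<kappa> < 1" and d: "\<delta> > 0"
    and n: "n > 0" "5 / (1 - \<kappa>) \<le> real n"
  shows "\<epsilon> powr (-5) * exp (- \<delta> * \<epsilon> powr (\<kappa> - 1)) \<le> (real n / \<delta>) ^ n"
proof -
  define x where "x = \<epsilon> powr (\<kappa> - 1)"
  have x1: "x \<ge> 1"
  proof -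
    have "\<epsilon> powr 0 \<le> \<epsilon> powr (\<kappa> - 1)" using e k by (intro powr_mono') auto
    then show ?thesis using e unfolding x_def by simp
  qed
  have "\<epsilon> powr (-5) = x powr (5 / (1 - \<kappa>))"
  proof -
    have "(\<kappa> - 1) * (5 / (1 - \<kappa>)) = -5" using k by (simp add: divide_simps)
    then show ?thesis unfolding x_def powr_powr by simp
  qed
  also have "\<dots> \<le> x powr (real n)" using n x1 by (intro powr_mono) auto
  also have "\<dots> = x ^ n" using x1 by (simp add: powr_realpow)
  also have "\<dots> = (real n / \<delta>) ^ n * (\<delta> * x / real n) ^ n"
    using d n by (simp add: power_mult_distrib[symmetric])
  also have "\<dots> \<le> (real n / \<delta>) ^ n * exp (\<delta> * x)"
  proof -
    have "(\<delta> * x / real n) ^ n \<le> (1 + \<delta> * x / real n) ^ n"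
      using d x1 n by (intro power_mono) auto
    also have "\<dots> \<le> exp (\<delta> * x)"
    proof -
      have "\<delta> * x \<ge> 0" using d x1 by simp
      then show ?thesis using n by (intro exp_ge_one_plus_x_over_n_power_n) auto
    qed
    finally show ?thesis using d n by (intro mult_left_mono) auto
  qed
  finally have "\<epsilon> powr (-5) * exp (- \<delta> * x) \<le> (real n / \<delta>) ^ n * exp (\<delta> * x) * exp (- \<delta> * x)"
    by (intro mult_right_mono) auto
  also have "\<dots> = (real n / \<delta>) ^ n" by (simp add: mult.assoc exp_add[symmetric])
  finally show ?thesis unfolding x_def .
qed

lemma Mt_lt:
  fixes A p q gmax :: real
  assumes A: "A > 0" and p: "p > 0" and q: "q > 0" and g: "gmax > 0"
  shows "A * (p + q) / gmax * (q / p) powr ((p - q) / (p + q)) < 16 * (q * A / gmax)"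
proof -
  have key: "(p + q) * (q / p) powr ((p - q) / (p + q)) < 16 * q"
  proof (cases "q \<ge> p")
    case True
    have "(q / p) powr ((p - q) / (p + q)) \<le> (q / p) powr 0"
      using True p q by (intro powr_mono) (auto simp: divide_nonpos_pos)
    then have t1: "(q / p) powr ((p - q) / (p + q)) \<le> 1" using p q by simp
    have "(p + q) * (q / p) powr ((p - q) / (p + q)) \<le> p + q"
      using mult_left_mono[OF t1, of "p + q"] p q by simp
    then show ?thesis using True p q by linarith
  next
    case False
    define e where "e = (p - q) / (p + q)"
    have qp: "q / p > 0" using p q by simp
    have e1: "e - 1 = - 2 * q / (p + q)" unfolding e_def using p q by (simp add: field_simps)
    have lnb: "ln (q / p) \<ge> 1 - p / q"
    proof -
      have "ln (p / q) \<le> p / q - 1" using p q by (intro ln_le_minus_one) auto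
      moreover have "ln (q / p) = - ln (p / q)" using p q by (simp add: ln_div)
      ultimately show ?thesis by linarith
    qed
    have "(e - 1) * ln (q / p) \<le> (e - 1) * (1 - p / q)"
      using lnb e1 p q by (intro mult_left_mono_neg) (auto simp: divide_nonpos_pos)
    also have "\<dots> = 2 * (p - q) / (p + q)"
    proof -
      have pq: "p + q \<noteq> 0" "q \<noteq> 0" using p q by auto
      have "1 - p / q = (q - p) / q" using pq by (simp add: diff_divide_distrib)
      then have "- 2 * q / (p + q) * (1 - p / q) = (- 2 * q * (q - p)) / ((p + q) * q)" by simp
      also have "\<dots> = ((- 2 * (q - p)) * q) / ((p + q) * q)"
        by (rule arg_cong[where f="\<lambda>t. t / ((p + q) * q)"]) (simp add: algebra_simps)
      also have "\<dots> = (- 2 * (q - p)) / (p + q)" by (rule nonzero_mult_divide_mult_cancel_right[OF pq(2)])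
      also have "\<dots> = 2 * (p - q) / (p + q)" by (rule arg_cong[where f="\<lambda>t. t / (p + q)"]) simp
      finally show ?thesis unfolding e1 .
    qed
    also have "\<dots> \<le> 2" using p q by (simp add: field_simps)
    finally have ex: "(e - 1) * ln (q / p) \<le> 2" .
    have "(q / p) powr e = (q / p) powr (1 + (e - 1))" by simp
    also have "\<dots> = (q / p) powr 1 * (q / p) powr (e - 1)" by (rule powr_add)
    also have "\<dots> = (q / p) * exp ((e - 1) * ln (q / p))" using qp by (simp add: powr_def mult.commute)
    also have "\<dots> \<le> (q / p) * exp 2" using ex qp by (intro mult_left_mono) auto
    finally have pe: "(q / p) powr e \<le> (q / p) * exp 2" .
    have "exp (2::real) = exp 1 * exp 1" by (simp add: exp_add[symmetric])
    also have "\<dots> < (272/100) * (272/100)"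
      using e_less_272 by (intro mult_strict_mono) auto
    finally have e2: "exp (2::real) < 8" by simp
    have "(p + q) * (q / p) powr e \<le> (p + q) * ((q / p) * exp 2)"
      using pe p q by (intro mult_left_mono) auto
    also have "\<dots> < (2 * p) * ((q / p) * 8)"
    proof -
      have A1: "q / p * exp 2 < q / p * 8" by (rule mult_strict_left_mono[OF e2 qp])
      have A2: "p + q < 2 * p" using False by simp
      show ?thesis by (rule mult_strict_mono[OF A2 A1]) (use p qp q in \<open>auto intro!: divide_nonneg_pos\<close>)
    qed
    also have "\<dots> = 16 * q" using p by simp
    finally show ?thesis unfolding e_def .
  qed
  let ?t = "(q / p) powr ((p - q) / (p + q))"
  have "A / gmax * ((p + q) * ?t) < A / gmax * (16 * q)"
    by (rule mult_strict_left_mono[OF key]) (use A g in simp)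
  moreover have "A * (p + q) / gmax * ?t = A / gmax * ((p + q) * ?t)" by simp
  moreover have "16 * (q * A / gmax) = A / gmax * (16 * q)" by simp
  ultimately show ?thesis by linarith
qed


context nst begin
context
  fixes gmax gmin L \<kappa> :: real
  assumes gmax: "\<And>r. r \<in> {0..R} \<Longrightarrow> g r \<le> gmax"
    and gmin: "gmin > 0" "\<And>r. r \<in> {0..R} \<Longrightarrow> gmin \<le> g r"
    and L: "L > 0" "L\<^sup>2 * gmax = q * A"
    and kap: "0 < \<kappa>" "\<kappa> < 1"
    and eps1: "\<epsilon> \<le> 1" and ek: "\<epsilon> powr \<kappa> \<le> R / 4"
begin

definition "Z0 = R ^ N * (B - A) / (real N * gmin * (R / 2) ^ (N - 1))"

lemma lam_pos: "L / \<epsilon> > 0" using L eps by simp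

lemma lamb': "(L / \<epsilon>)\<^sup>2 * \<epsilon>\<^sup>2 * gmax \<le> q * A"
  using L eps by (simp add: power_divide)

lemma DD_eq: "D gmin = Z0 / \<epsilon>\<^sup>2"
proof -
  have "D gmin = (- v R) / (gmin * (R / 2) ^ (N - 1))" by (rule D_def[OF lam_pos gmax lamb' gmin])
  also have "\<dots> = (R ^ N * (B - A) / (real N * \<epsilon>\<^sup>2)) / (gmin * (R / 2) ^ (N - 1))"
    unfolding vR by simp
  also have "\<dots> = Z0 / \<epsilon>\<^sup>2" unfolding Z0_def using eps gmin N2 Rpos by (simp add: field_simps)
  finally show ?thesis .
qed

lemma Z0_pos: "Z0 > 0" unfolding Z0_def using Rpos AB N2 gmin by auto

lemma i_eq: "\<epsilon>\<^sup>2 * (D gmin)\<^sup>2 = Z0\<^sup>2 / \<epsilon>\<^sup>2"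
  unfolding DD_eq using eps by (simp add: power_divide power2_eq_square)

lemma ii: "\<epsilon>\<^sup>2 * (D gmin)\<^sup>2 * exp (- (L / \<epsilon>) * R / 2) \<le> 16 * Z0\<^sup>2 / (L\<^sup>2 * R\<^sup>2)"
proof -
  have y: "L / \<epsilon> * R / 2 > 0" using L eps Rpos by simp
  have "exp (- (L / \<epsilon>) * R / 2) = exp (- (L / \<epsilon> * R / 2))" by simp
  also have "\<dots> \<le> 4 / (L / \<epsilon> * R / 2)\<^sup>2" by (rule exp_neg_le_sq[OF y])
  also have "\<dots> = 16 * \<epsilon>\<^sup>2 / (L\<^sup>2 * R\<^sup>2)" using eps by (simp add: power_divide power_mult_distrib field_simps)
  finally have ex: "exp (- (L / \<epsilon>) * R / 2) \<le> 16 * \<epsilon>\<^sup>2 / (L\<^sup>2 * R\<^sup>2)" .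
  have "\<epsilon>\<^sup>2 * (D gmin)\<^sup>2 * exp (- (L / \<epsilon>) * R / 2) = Z0\<^sup>2 / \<epsilon>\<^sup>2 * exp (- (L / \<epsilon>) * R / 2)"
    using i_eq by simp
  also have "\<dots> \<le> Z0\<^sup>2 / \<epsilon>\<^sup>2 * (16 * \<epsilon>\<^sup>2 / (L\<^sup>2 * R\<^sup>2))" using ex by (intro mult_left_mono) auto
  also have "\<dots> = 16 * Z0\<^sup>2 / (L\<^sup>2 * R\<^sup>2)" using eps by (simp add: field_simps)
  finally show ?thesis .
qed

lemma iii: "\<epsilon>\<^sup>2 * ((D gmin)\<^sup>2 / (2 * (L / \<epsilon>))) = Z0\<^sup>2 / (2 * L * \<epsilon>)"
  unfolding DD_eq using eps L by (simp add: power_divide power2_eq_square field_simps)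


lemma e_pos: "\<epsilon> powr \<kappa> > 0" using eps by simp

lemma X_le: "0 \<le> X \<Longrightarrow> X \<le> X / \<epsilon>"
  using eps eps1 by (simp add: le_divide_eq mult_left_le)

lemma est1:
  assumes du: "\<And>s. s \<in> {0<..<R} \<Longrightarrow> du s = u' s"
    and dl: "2 * L - Mt / 2 > 0" and n: "n > 0" "5 / (1 - \<kappa>) \<le> real n"
  shows "integral {\<epsilon> powr \<kappa>..R - \<epsilon> powr \<kappa>} (\<lambda>s. 1 / s * (du s)\<^sup>2)
     \<le> 16 * R * Z0\<^sup>2 * (real n / (2 * L - Mt / 2)) ^ n * exp (- Mt / (2 * \<epsilon> powr (1 - \<kappa>)))"
proof -
  define e where "e = \<epsilon> powr \<kappa>"
  define x where "x = \<epsilon> powr (\<kappa> - 1)"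
  define \<delta> where "\<delta> = 2 * L - Mt / 2"
  have e0: "e > 0" "e \<le> R / 4" using e_pos ek unfolding e_def by auto
  have "integral {e..R - e} (\<lambda>s. 1 / s * (du s)\<^sup>2) = integral {e..R - e} (\<lambda>s. 1 / s * (u' s)\<^sup>2)"
    by (rule integral_spike[of "{}"]) (use e0 du in auto)
  also have "\<dots> \<le> R * (16 * (D gmin)\<^sup>2 * exp (- 2 * (L / \<epsilon>) * e) / e)"
    by (rule E_1[OF lam_pos gmax lamb' gmin e0])
  also have "\<dots> = 16 * R * Z0\<^sup>2 * (1 / ((\<epsilon>\<^sup>2)\<^sup>2 * e)) * exp (- 2 * L * x)"
  proof -
    have "(L / \<epsilon>) * e = L * x"
    proof -
      have "e / \<epsilon> = x" unfolding e_def x_def using eps by (simp add: powr_diff)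
      then show ?thesis by (metis times_divide_eq_left times_divide_eq_right)
    qed
    then have "exp (- 2 * (L / \<epsilon>) * e) = exp (- 2 * L * x)" by (simp add: mult.assoc)
    then show ?thesis unfolding DD_eq using e0 eps by (simp add: power_divide field_simps)
  qed
  also have "\<dots> \<le> 16 * R * Z0\<^sup>2 * \<epsilon> powr (-5) * exp (- 2 * L * x)"
  proof -
    have "\<epsilon> powr 5 \<le> \<epsilon> powr (4 + \<kappa>)" using eps eps1 kap by (intro powr_mono') auto
    also have "\<epsilon> powr (4 + \<kappa>) = (\<epsilon>\<^sup>2)\<^sup>2 * e"
    proof -
      have "\<epsilon> powr (real 4) = \<epsilon> ^ 4" by (rule powr_realpow[OF eps])
      then have "\<epsilon> powr 4 = (\<epsilon>\<^sup>2)\<^sup>2" by simp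
      then show ?thesis unfolding e_def powr_add by simp
    qed
    finally have a: "\<epsilon> powr 5 \<le> (\<epsilon>\<^sup>2)\<^sup>2 * e" .
    have "1 / ((\<epsilon>\<^sup>2)\<^sup>2 * e) \<le> 1 / \<epsilon> powr 5"
      using a eps e0 by (intro divide_left_mono) auto
    also have "\<dots> = \<epsilon> powr (-5)" by (simp add: powr_minus divide_inverse)
    finally have "1 / ((\<epsilon>\<^sup>2)\<^sup>2 * e) \<le> \<epsilon> powr (-5)" .
    then show ?thesis using Z0_pos Rpos by (intro mult_right_mono mult_left_mono) auto
  qed
  also have "\<dots> = 16 * R * Z0\<^sup>2 * (\<epsilon> powr (-5) * exp (- \<delta> * x)) * exp (- (Mt / 2) * x)"
    unfolding \<delta>_def by (simp add: mult.assoc exp_add[symmetric] algebra_simps)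
  also have "\<dots> \<le> 16 * R * Z0\<^sup>2 * (real n / \<delta>) ^ n * exp (- (Mt / 2) * x)"
  proof -
    have d0: "\<delta> > 0" using dl unfolding \<delta>_def .
    have pb: "\<epsilon> powr (-5) * exp (- \<delta> * x) \<le> (real n / \<delta>) ^ n"
      unfolding x_def by (rule powr_exp_bound[OF eps eps1 kap d0 n])
    have c0: "0 \<le> 16 * R * Z0\<^sup>2" using Rpos by simp
    show ?thesis
      by (rule mult_right_mono[OF mult_left_mono[OF pb c0]]) simp
  qed
  also have "exp (- (Mt / 2) * x) = exp (- Mt / (2 * \<epsilon> powr (1 - \<kappa>)))"
  proof -
    have "\<epsilon> powr (1 - \<kappa>) = \<epsilon> powr (- (\<kappa> - 1))" by simp
    also have "\<dots> = inverse x" unfolding x_def by (rule powr_minus)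
    finally have ix: "\<epsilon> powr (1 - \<kappa>) = inverse x" .
    have x0: "x > 0" unfolding x_def using eps by simp
    have "- (Mt / 2) * x = - Mt / (2 * inverse x)" using x0 by (simp add: field_simps)
    then show ?thesis unfolding ix by (rule arg_cong)
  qed
  finally show ?thesis unfolding e_def \<delta>_def .
qed

end
end


lemma aux_div: "(e::real) > 0 \<Longrightarrow> e\<^sup>2 * X = Y \<Longrightarrow> X = Y / e\<^sup>2"
  by (simp add: field_simps)

context nst begin
context
  fixes gmax gmin L \<kappa> :: real
  assumes gmax: "\<And>r. r \<in> {0..R} \<Longrightarrow> g r \<le> gmax"
    and gmin: "gmin > 0" "\<And>r. r \<in> {0..R} \<Longrightarrow> gmin \<le> g r"
    and L: "L > 0" "L\<^sup>2 * gmax = q * A"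
    and kap: "0 < \<kappa>" "\<kappa> < 1"
    and eps1: "\<epsilon> \<le> 1" and ek: "\<epsilon> powr \<kappa> \<le> R / 4"
begin

lemmas ctx = gmax gmin L kap eps1 ek

lemma est2:
  assumes du: "\<And>s. s \<in> {0<..<R} \<Longrightarrow> du s = u' s"
  shows "integral {R - \<epsilon> powr \<kappa>..R} (\<lambda>s. (du s)\<^sup>2) \<le> (Z0 gmin)\<^sup>2 / (2 * L * \<epsilon> ^ 3)"
proof -
  define e where "e = \<epsilon> powr \<kappa>"
  have e0: "e > 0" "e \<le> R / 4" using e_pos[OF ctx] ek unfolding e_def by auto
  have "integral {R - e..R} (\<lambda>s. (du s)\<^sup>2) = integral {R - e..R} (\<lambda>s. (u' s)\<^sup>2)"
    by (rule integral_spike[of "{R}"]) (use e0 du in auto)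
  also have "\<dots> \<le> (D gmin)\<^sup>2 / (2 * (L / \<epsilon>))"
    by (rule E_right[OF lam_pos[OF ctx] gmax lamb'[OF ctx] gmin]) (use e0 in auto)
  also have "\<dots> = (Z0 gmin)\<^sup>2 / (2 * L * \<epsilon> ^ 3)"
  proof -
    have h: "\<epsilon>\<^sup>2 * ((D gmin)\<^sup>2 / (2 * (L / \<epsilon>))) = (Z0 gmin)\<^sup>2 / (2 * L * \<epsilon>)" by (rule iii[OF ctx])
    have "(D gmin)\<^sup>2 / (2 * (L / \<epsilon>)) = ((Z0 gmin)\<^sup>2 / (2 * L * \<epsilon>)) / \<epsilon>\<^sup>2"
      by (rule aux_div[OF eps h])
    also have "\<dots> = (Z0 gmin)\<^sup>2 / (2 * L * \<epsilon> ^ 3)"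
      using eps L by (simp add: field_simps power2_eq_square power3_eq_cube)
    finally show ?thesis .
  qed
  finally show ?thesis unfolding e_def .
qed


lemma estL1:
  assumes du: "\<And>s. s \<in> {0<..<R} \<Longrightarrow> du s = u' s"
    and w: "continuous_on {0..R} w" "\<And>s. s \<in> {0..R} \<Longrightarrow> \<bar>w s\<bar> \<le> W"
  shows "\<bar>\<epsilon>\<^sup>2 / 2 * integral {0..R} (\<lambda>s. w s * s ^ (N - 1) * (du s)\<^sup>2)\<bar>
     \<le> (W * R ^ (N - 1) / 2 * (256 * (Z0 gmin)\<^sup>2 / (L\<^sup>2 * R) + (Z0 gmin)\<^sup>2 / (2 * L))) / \<epsilon>"
proof -
  have W0: "W \<ge> 0" using w(2)[of 0] Rpos by auto
  let ?T1 = "\<epsilon>\<^sup>2 * (D gmin)\<^sup>2 * exp (- (L / \<epsilon>) * R / 2)"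
  let ?T2 = "\<epsilon>\<^sup>2 * ((D gmin)\<^sup>2 / (2 * (L / \<epsilon>)))"
  have "integral {0..R} (\<lambda>s. w s * s ^ (N - 1) * (du s)\<^sup>2) = integral {0..R} (\<lambda>s. w s * s ^ (N - 1) * (u' s)\<^sup>2)"
    by (rule integral_spike[of "{0, R}"]) (use du in auto)
  then have I: "\<bar>integral {0..R} (\<lambda>s. w s * s ^ (N - 1) * (du s)\<^sup>2)\<bar>
      \<le> W * R ^ (N - 1) * (16 * (D gmin)\<^sup>2 * exp (- (L / \<epsilon>) * R / 2) * R + (D gmin)\<^sup>2 / (2 * (L / \<epsilon>)))"
    using E_L1[OF lam_pos[OF ctx] gmax lamb'[OF ctx] gmin w] by simp
  have "\<bar>\<epsilon>\<^sup>2 / 2 * integral {0..R} (\<lambda>s. w s * s ^ (N - 1) * (du s)\<^sup>2)\<bar>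
      = \<epsilon>\<^sup>2 / 2 * \<bar>integral {0..R} (\<lambda>s. w s * s ^ (N - 1) * (du s)\<^sup>2)\<bar>" by (simp add: abs_mult)
  also have "\<dots> \<le> \<epsilon>\<^sup>2 / 2 * (W * R ^ (N - 1) * (16 * (D gmin)\<^sup>2 * exp (- (L / \<epsilon>) * R / 2) * R + (D gmin)\<^sup>2 / (2 * (L / \<epsilon>))))"
    using I by (intro mult_left_mono) auto
  also have "\<dots> = W * R ^ (N - 1) / 2 * (16 * R * ?T1 + ?T2)" by (simp add: algebra_simps)
  also have "\<dots> \<le> W * R ^ (N - 1) / 2 * (16 * R * (16 * (Z0 gmin)\<^sup>2 / (L\<^sup>2 * R\<^sup>2)) + (Z0 gmin)\<^sup>2 / (2 * L * \<epsilon>))"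
    using ii[OF ctx] iii[OF ctx] W0 Rpos by (intro mult_left_mono add_mono) auto
  also have "\<dots> = W * R ^ (N - 1) / 2 * (256 * (Z0 gmin)\<^sup>2 / (L\<^sup>2 * R) + ((Z0 gmin)\<^sup>2 / (2 * L)) / \<epsilon>)"
    using Rpos eps L by (simp add: power2_eq_square)
  also have "\<dots> \<le> W * R ^ (N - 1) / 2 * (256 * (Z0 gmin)\<^sup>2 / (L\<^sup>2 * R) / \<epsilon> + ((Z0 gmin)\<^sup>2 / (2 * L)) / \<epsilon>)"
    using X_le[OF ctx, of "256 * (Z0 gmin)\<^sup>2 / (L\<^sup>2 * R)"] W0 Rpos L by (intro mult_left_mono add_mono) auto
  also have "\<dots> = (W * R ^ (N - 1) / 2 * (256 * (Z0 gmin)\<^sup>2 / (L\<^sup>2 * R) + (Z0 gmin)\<^sup>2 / (2 * L))) / \<epsilon>"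
    using eps L Rpos by (simp add: field_simps)
  finally show ?thesis .
qed


lemma estL2:
  assumes du: "\<And>s. s \<in> {0<..<R} \<Longrightarrow> du s = u' s"
    and w: "continuous_on {0..R} w" "\<And>s. s \<in> {0..R} \<Longrightarrow> \<bar>w s\<bar> \<le> W"
  shows "\<bar>- \<epsilon>\<^sup>2 / 2 * g (\<epsilon> powr \<kappa>) * (du (\<epsilon> powr \<kappa>))\<^sup>2
        + \<epsilon>\<^sup>2 / 2 * integral {\<epsilon> powr \<kappa>..R} (\<lambda>s. w s / s * (du s)\<^sup>2)\<bar>
     \<le> (gmax * 128 * (Z0 gmin)\<^sup>2 / (L\<^sup>2 * R\<^sup>2) + W / 2 * (256 * (Z0 gmin)\<^sup>2 / (L\<^sup>2 * R) + (Z0 gmin)\<^sup>2 / (R * L))) / \<epsilon>"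
proof -
  define e where "e = \<epsilon> powr \<kappa>"
  have e0: "e > 0" "e \<le> R / 4" using e_pos[OF ctx] ek unfolding e_def by auto
  have ee: "\<epsilon> \<le> e"
  proof -
    have "\<epsilon> powr 1 \<le> \<epsilon> powr \<kappa>" using eps eps1 kap by (intro powr_mono') auto
    then show ?thesis using eps unfolding e_def by simp
  qed
  have W0: "W \<ge> 0" using w(2)[of 0] Rpos by auto
  let ?T1 = "\<epsilon>\<^sup>2 * (D gmin)\<^sup>2 * exp (- (L / \<epsilon>) * R / 2)"
  let ?T2 = "\<epsilon>\<^sup>2 * ((D gmin)\<^sup>2 / (2 * (L / \<epsilon>)))"
  have T1: "?T1 \<le> 16 * (Z0 gmin)\<^sup>2 / (L\<^sup>2 * R\<^sup>2)" by (rule ii[OF ctx])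
  have T2: "?T2 = (Z0 gmin)\<^sup>2 / (2 * L * \<epsilon>)" by (rule iii[OF ctx])
  have T10: "?T1 \<ge> 0" by simp
  have eR: "e \<in> {0..R/2}" "e \<in> {0<..<R}" "e \<in> {0..R}" using e0 Rpos by auto
  have ue: "(du e)\<^sup>2 \<le> 16 * (D gmin)\<^sup>2 * exp (- (L / \<epsilon>) * R / 2)"
    using sq_b[OF lam_pos[OF ctx] gmax lamb'[OF ctx] gmin eR(1)] du[OF eR(2)] by simp
  have ge: "0 < g e" "g e \<le> gmax" using gpos[OF eR(3)] gmax[OF eR(3)] by auto
  have "\<bar>- \<epsilon>\<^sup>2 / 2 * g e * (du e)\<^sup>2\<bar> = \<epsilon>\<^sup>2 / 2 * g e * (du e)\<^sup>2"
    using ge by (simp add: abs_mult)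
  also have "\<dots> \<le> \<epsilon>\<^sup>2 / 2 * gmax * (16 * (D gmin)\<^sup>2 * exp (- (L / \<epsilon>) * R / 2))"
    using ge ue by (intro mult_mono mult_left_mono) auto
  also have "\<dots> = 8 * gmax * ?T1" by (simp add: algebra_simps)
  also have "\<dots> \<le> 8 * gmax * (16 * (Z0 gmin)\<^sup>2 / (L\<^sup>2 * R\<^sup>2))"
    using T1 ge by (intro mult_left_mono) auto
  also have "\<dots> = gmax * 128 * (Z0 gmin)\<^sup>2 / (L\<^sup>2 * R\<^sup>2)" by simp
  also have "\<dots> \<le> gmax * 128 * (Z0 gmin)\<^sup>2 / (L\<^sup>2 * R\<^sup>2) / \<epsilon>"
    using ge by (intro X_le[OF ctx]) auto
  finally have tA: "\<bar>- \<epsilon>\<^sup>2 / 2 * g e * (du e)\<^sup>2\<bar> \<le> gmax * 128 * (Z0 gmin)\<^sup>2 / (L\<^sup>2 * R\<^sup>2) / \<epsilon>" .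
  have "integral {e..R} (\<lambda>s. w s / s * (du s)\<^sup>2) = integral {e..R} (\<lambda>s. w s / s * (u' s)\<^sup>2)"
    by (rule integral_spike[of "{R}"]) (use du e0 in auto)
  then have I: "\<bar>integral {e..R} (\<lambda>s. w s / s * (du s)\<^sup>2)\<bar>
      \<le> W * (16 * (D gmin)\<^sup>2 * exp (- (L / \<epsilon>) * R / 2) / e * R + 2 / R * ((D gmin)\<^sup>2 / (2 * (L / \<epsilon>))))"
    using E_L2[OF lam_pos[OF ctx] gmax lamb'[OF ctx] gmin _ _ w, of e] e0 by simp
  have "\<bar>\<epsilon>\<^sup>2 / 2 * integral {e..R} (\<lambda>s. w s / s * (du s)\<^sup>2)\<bar>
     = \<epsilon>\<^sup>2 / 2 * \<bar>integral {e..R} (\<lambda>s. w s / s * (du s)\<^sup>2)\<bar>" by (simp add: abs_mult)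
  also have "\<dots> \<le> \<epsilon>\<^sup>2 / 2 * (W * (16 * (D gmin)\<^sup>2 * exp (- (L / \<epsilon>) * R / 2) / e * R + 2 / R * ((D gmin)\<^sup>2 / (2 * (L / \<epsilon>)))))"
    using I by (intro mult_left_mono) auto
  also have "\<dots> = W / 2 * (16 * R / e * ?T1 + 2 / R * ?T2)" by (simp add: algebra_simps)
  also have "\<dots> \<le> W / 2 * (16 * R / \<epsilon> * (16 * (Z0 gmin)\<^sup>2 / (L\<^sup>2 * R\<^sup>2)) + 2 / R * ((Z0 gmin)\<^sup>2 / (2 * L * \<epsilon>)))"
  proof -
    have "16 * R / e * ?T1 \<le> 16 * R / \<epsilon> * ?T1"
      using ee eps Rpos T10 by (intro mult_right_mono divide_left_mono) auto
    also have "\<dots> \<le> 16 * R / \<epsilon> * (16 * (Z0 gmin)\<^sup>2 / (L\<^sup>2 * R\<^sup>2))"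
      using T1 eps Rpos by (intro mult_left_mono) auto
    finally have a: "16 * R / e * ?T1 \<le> 16 * R / \<epsilon> * (16 * (Z0 gmin)\<^sup>2 / (L\<^sup>2 * R\<^sup>2))" .
    show ?thesis using a T2 W0 Rpos by (intro mult_left_mono add_mono) auto
  qed
  also have "\<dots> = W / 2 * (256 * (Z0 gmin)\<^sup>2 / (L\<^sup>2 * R) + (Z0 gmin)\<^sup>2 / (R * L)) / \<epsilon>"
    using eps L Rpos by (simp add: field_simps power2_eq_square)
  finally have tB: "\<bar>\<epsilon>\<^sup>2 / 2 * integral {e..R} (\<lambda>s. w s / s * (du s)\<^sup>2)\<bar>
     \<le> W / 2 * (256 * (Z0 gmin)\<^sup>2 / (L\<^sup>2 * R) + (Z0 gmin)\<^sup>2 / (R * L)) / \<epsilon>" .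
  have "\<bar>- \<epsilon>\<^sup>2 / 2 * g e * (du e)\<^sup>2 + \<epsilon>\<^sup>2 / 2 * integral {e..R} (\<lambda>s. w s / s * (du s)\<^sup>2)\<bar>
     \<le> gmax * 128 * (Z0 gmin)\<^sup>2 / (L\<^sup>2 * R\<^sup>2) / \<epsilon> + W / 2 * (256 * (Z0 gmin)\<^sup>2 / (L\<^sup>2 * R) + (Z0 gmin)\<^sup>2 / (R * L)) / \<epsilon>"
    using tA tB abs_triangle_ineq[of "- \<epsilon>\<^sup>2 / 2 * g e * (du e)\<^sup>2" "\<epsilon>\<^sup>2 / 2 * integral {e..R} (\<lambda>s. w s / s * (du s)\<^sup>2)"]
    by linarith
  then show ?thesis unfolding e_def by (simp add: add_divide_distrib)
qed

end
end


theorem lemma3p8: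
  fixes N :: nat and R A B p q \<kappa> :: real and g :: "real \<Rightarrow> real"
    and U :: "real \<Rightarrow> real \<Rightarrow> real"
  assumes "N \<ge> 2" and "R > 0"
    and "smooth_on_closed R g" and "\<forall>r\<in>{0..R}. g r > 0"
    and "0 < A" and "A < B" and "p > 0" and "q > 0"
    and "0 < \<kappa>" and "\<kappa> < 1"
    and sol: "\<And>\<epsilon>. \<epsilon> > 0 \<Longrightarrow> solves_Nstar N R g A B p q \<epsilon> (U \<epsilon>)"
  defines "Mt \<equiv> sqrt (A * (p + q) / Sup (g ` {0..R}) * (q / p) powr ((p - q) / (p + q)))"
  shows "\<exists>C1 C2 C3. C1 > 0 \<and> C2 > 0 \<and> C3 > 0 \<and>
    (\<forall>\<^sub>F \<epsilon> in at_right 0.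
       integral {\<epsilon> powr \<kappa>..R - \<epsilon> powr \<kappa>} (\<lambda>s. 1 / s * (deriv (U \<epsilon>) s)\<^sup>2)
         \<le> C1 * exp (- Mt / (2 * \<epsilon> powr (1 - \<kappa>)))
     \<and> integral {R - \<epsilon> powr \<kappa>..R} (\<lambda>s. (deriv (U \<epsilon>) s)\<^sup>2) \<le> C2 / (Mt * \<epsilon> ^ 3)
     \<and> \<bar>\<epsilon>\<^sup>2 / 2 * integral {0..R}
          (\<lambda>s. ((real N - 2) * g s + s * deriv g s) / R ^ N * s ^ (N - 1) * (deriv (U \<epsilon>) s)\<^sup>2)\<bar>
         \<le> C3 / \<epsilon>
     \<and> \<bar>- \<epsilon>\<^sup>2 / 2 * g (\<epsilon> powr \<kappa>) * (deriv (U \<epsilon>) (\<epsilon> powr \<kappa>))\<^sup>2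
        + \<epsilon>\<^sup>2 / 2 * integral {\<epsilon> powr \<kappa>..R}
          (\<lambda>s. (2 * (real N - 1) * g s + s * deriv g s) / s * (deriv (U \<epsilon>) s)\<^sup>2)\<bar>
         \<le> C3 / \<epsilon>)"
proof -
  note gpos = assms(4)
  from assms(3) obtain T where T: "open T" "{0..R} \<subseteq> T" "C_inf_on T g"
    unfolding smooth_on_closed_def by blast
  have gdiff: "g differentiable (at r)" if "r \<in> {0..R}" for r
    using T(3) T(2) that unfolding C_inf_on_def by (metis funpow_0 subsetD)
  have gd: "(g has_real_derivative deriv g r) (at r)" if "r \<in> {0..R}" for r
    using gdiff[OF that] DERIV_deriv_iff_real_differentiable by blast
  have dgdiff: "deriv g differentiable (at r)" if "r \<in> {0..R}" for r
  proof -
    have "((deriv ^^ 1) g) differentiable (at r)" using T(3) T(2) that unfolding C_inf_on_def by blast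
    then show ?thesis by simp
  qed
  have gc: "continuous_on {0..R} g"
    using gdiff by (meson continuous_at_imp_continuous_on differentiable_imp_continuous_within)
  have dgc: "continuous_on {0..R} (deriv g)"
    using dgdiff by (meson continuous_at_imp_continuous_on differentiable_imp_continuous_within)
  define gmax where "gmax = Sup (g ` {0..R})"
  have bdd: "bdd_above (g ` {0..R})"
    by (rule bounded_imp_bdd_above, rule compact_imp_bounded, rule compact_continuous_image[OF gc compact_Icc])
  have gmax: "g r \<le> gmax" if "r \<in> {0..R}" for r
    unfolding gmax_def using bdd that by (auto intro!: cSup_upper)
  have gmax0: "gmax > 0" using gmax[of 0] gpos assms(2) by force
  obtain m where m: "m \<in> {0..R}" "\<forall>x\<in>{0..R}. g m \<le> g x"
    using continuous_attains_inf[OF compact_Icc _ gc] assms(2) by auto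
  define gmin where "gmin = g m"
  have gmin: "gmin > 0" "\<And>r. r \<in> {0..R} \<Longrightarrow> gmin \<le> g r" using m gpos unfolding gmin_def by auto
  define L where "L = sqrt (q * A / gmax)"
  have qAg: "q * A / gmax > 0" using assms(5,8) gmax0 by simp
  have L: "L > 0" "L\<^sup>2 * gmax = q * A" unfolding L_def using qAg gmax0 by auto
  define X where "X = A * (p + q) / gmax * (q / p) powr ((p - q) / (p + q))"
  have X0: "X > 0" unfolding X_def using assms(5,7,8) gmax0 by auto
  have MtX: "Mt = sqrt X" unfolding Mt_def X_def gmax_def ..
  have Mt0: "Mt > 0" unfolding MtX using X0 by simp
  have Mt4: "Mt < 4 * L"
  proof -
    have "X < 16 * (q * A / gmax)" unfolding X_def by (rule Mt_lt) (use assms(5,7,8) gmax0 in auto)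
    then have "sqrt X < sqrt (16 * (q * A / gmax))" by (rule real_sqrt_less_mono)
    also have "sqrt (16 * (q * A / gmax)) = 4 * L"
    proof -
      have "sqrt (16 * (q * A / gmax)) = sqrt 16 * sqrt (q * A / gmax)" by (rule real_sqrt_mult)
      moreover have "sqrt (16::real) = 4" by (simp add: real_sqrt_eq_iff)
      ultimately show ?thesis unfolding L_def by simp
    qed
    finally show ?thesis unfolding MtX .
  qed
  have dl: "2 * L - Mt / 2 > 0" using Mt4 by simp
  define n where "n = nat \<lceil>5 / (1 - \<kappa>)\<rceil> + 1"
  have n: "n > 0" "5 / (1 - \<kappa>) \<le> real n"
    unfolding n_def using real_nat_ceiling_ge[of "5 / (1 - \<kappa>)"] by auto
  define w1 where "w1 = (\<lambda>s. ((real N - 2) * g s + s * deriv g s) / R ^ N)"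
  define w2 where "w2 = (\<lambda>s. 2 * (real N - 1) * g s + s * deriv g s)"
  have w1c: "continuous_on {0..R} w1" unfolding w1_def by (intro continuous_intros gc dgc) (use assms(2) in auto)
  have w2c: "continuous_on {0..R} w2" unfolding w2_def by (intro continuous_intros gc dgc)
  obtain W1 where W1: "\<And>s. s \<in> {0..R} \<Longrightarrow> \<bar>w1 s\<bar> \<le> W1"
  proof -
    obtain a where "\<forall>x\<in>w1 ` {0..R}. \<bar>x\<bar> \<le> a"
      using compact_imp_bounded[OF compact_continuous_image[OF w1c compact_Icc]] unfolding bounded_real by blast
    then show thesis using that[of a] by auto
  qed
  obtain W2 where W2: "\<And>s. s \<in> {0..R} \<Longrightarrow> \<bar>w2 s\<bar> \<le> W2"
  proof -
    obtain a where "\<forall>x\<in>w2 ` {0..R}. \<bar>x\<bar> \<le> a"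
      using compact_imp_bounded[OF compact_continuous_image[OF w2c compact_Icc]] unfolding bounded_real by blast
    then show thesis using that[of a] by auto
  qed
  have W10: "W1 \<ge> 0" using W1[of 0] assms(2) by auto
  have W20: "W2 \<ge> 0" using W2[of 0] assms(2) by auto
  define Zc where "Zc = R ^ N * (B - A) / (real N * gmin * (R / 2) ^ (N - 1))"
  have Zc0: "Zc > 0" unfolding Zc_def using assms(1,2,6) gmin by auto
  define C1 where "C1 = 16 * R * Zc\<^sup>2 * (real n / (2 * L - Mt / 2)) ^ n"
  define C2 where "C2 = Mt * Zc\<^sup>2 / (2 * L)"
  define C3a where "C3a = W1 * R ^ (N - 1) / 2 * (256 * Zc\<^sup>2 / (L\<^sup>2 * R) + Zc\<^sup>2 / (2 * L))"
  define C3b where "C3b = gmax * 128 * Zc\<^sup>2 / (L\<^sup>2 * R\<^sup>2) + W2 / 2 * (256 * Zc\<^sup>2 / (L\<^sup>2 * R) + Zc\<^sup>2 / (R * L))"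
  have C3a0: "C3a \<ge> 0" unfolding C3a_def using W10 L assms(2) by auto
  have C3b0: "C3b \<ge> 0" unfolding C3b_def using W20 L assms(2) gmax0 by auto
  define C3 where "C3 = C3a + C3b + 1"
  have C1: "C1 > 0" unfolding C1_def using assms(2) Zc0 dl n by auto
  have C2: "C2 > 0" unfolding C2_def using Mt0 Zc0 L by auto
  have C3: "C3 > 0" unfolding C3_def using C3a0 C3b0 by auto
  define e0 where "e0 = min 1 ((R / 4) powr (1 / \<kappa>))"
  have e00: "e0 > 0" unfolding e0_def using assms(2) by auto
  have per: "integral {\<epsilon> powr \<kappa>..R - \<epsilon> powr \<kappa>} (\<lambda>s. 1 / s * (deriv (U \<epsilon>) s)\<^sup>2)
         \<le> C1 * exp (- Mt / (2 * \<epsilon> powr (1 - \<kappa>)))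
     \<and> integral {R - \<epsilon> powr \<kappa>..R} (\<lambda>s. (deriv (U \<epsilon>) s)\<^sup>2) \<le> C2 / (Mt * \<epsilon> ^ 3)
     \<and> \<bar>\<epsilon>\<^sup>2 / 2 * integral {0..R}
          (\<lambda>s. ((real N - 2) * g s + s * deriv g s) / R ^ N * s ^ (N - 1) * (deriv (U \<epsilon>) s)\<^sup>2)\<bar>
         \<le> C3 / \<epsilon>
     \<and> \<bar>- \<epsilon>\<^sup>2 / 2 * g (\<epsilon> powr \<kappa>) * (deriv (U \<epsilon>) (\<epsilon> powr \<kappa>))\<^sup>2
        + \<epsilon>\<^sup>2 / 2 * integral {\<epsilon> powr \<kappa>..R}
          (\<lambda>s. (2 * (real N - 1) * g s + s * deriv g s) / s * (deriv (U \<epsilon>) s)\<^sup>2)\<bar>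
         \<le> C3 / \<epsilon>"
    if eps: "0 < \<epsilon>" "\<epsilon> < e0" for \<epsilon>
  proof -
    have eps1: "\<epsilon> \<le> 1" using eps unfolding e0_def by auto
    have ek: "\<epsilon> powr \<kappa> \<le> R / 4"
    proof -
      have "\<epsilon> powr \<kappa> \<le> ((R / 4) powr (1 / \<kappa>)) powr \<kappa>"
        using eps assms(9) unfolding e0_def by (intro powr_mono2) auto
      also have "\<dots> = R / 4" using assms(9) assms(2) by (simp add: powr_powr)
      finally show ?thesis .
    qed
    obtain U' where U'1: "\<forall>r\<in>{0..R}. (U \<epsilon> has_real_derivative U' r) (at r within {0..R})"
      and U'2: "continuous_on {0..R} U'" and U'3: "U' 0 = 0"
      and U'4: "U' R = R * (A - B) / (\<epsilon>\<^sup>2 * real N * g R)"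
      and Cinf: "C_inf_on {0<..<R} (U \<epsilon>)"
      and odeq: "\<forall>r\<in>{0<..<R}.
        \<epsilon>\<^sup>2 * g r * (deriv (deriv (U \<epsilon>)) r + ((real N - 1) / r + deriv g r / g r) * deriv (U \<epsilon>) r)
        = R ^ N / real N *
          (A * exp (p * U \<epsilon> r) / integral {0..R} (\<lambda>s. s ^ (N - 1) * exp (p * U \<epsilon> s))
           - B * exp (- q * U \<epsilon> r) / integral {0..R} (\<lambda>s. s ^ (N - 1) * exp (- q * U \<epsilon> s)))"
      using sol[OF eps(1)] unfolding solves_Nstar_def by blast
    have dU: "deriv (U \<epsilon>) r = U' r" if r: "r \<in> {0<..<R}" for r
    proof -
      have "(U \<epsilon> has_real_derivative U' r) (at r within {0..R})" using U'1 r by auto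
      then have "(U \<epsilon> has_real_derivative U' r) (at r)" using at_within_Icc_at[of 0 r R] r by auto
      then show ?thesis by (rule DERIV_imp_deriv)
    qed
    have U''d: "(U' has_real_derivative deriv (deriv (U \<epsilon>)) r) (at r)" if r: "r \<in> {0<..<R}" for r
    proof -
      have "((deriv ^^ 1) (U \<epsilon>)) differentiable (at r)" using Cinf r unfolding C_inf_on_def by blast
      then have "deriv (U \<epsilon>) differentiable (at r)" by simp
      then have "(deriv (U \<epsilon>) has_real_derivative deriv (deriv (U \<epsilon>)) r) (at r)"
        using DERIV_deriv_iff_real_differentiable by blast
      then show ?thesis
        by (rule has_field_derivative_transform_within_open[OF _ open_greaterThanLessThan r]) (rule dU)
    qed
    interpret I: nst N R A B p q \<epsilon> g "deriv g" "U \<epsilon>" U' "deriv (deriv (U \<epsilon>))"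
    proof
      show "2 \<le> N" "0 < R" "0 < A" "A < B" "0 < p" "0 < q" "0 < \<epsilon>" using assms eps by auto
      show "\<And>r. r \<in> {0..R} \<Longrightarrow> 0 < g r" using gpos by auto
      show "\<And>r. r \<in> {0..R} \<Longrightarrow> (g has_real_derivative deriv g r) (at r)" by (rule gd)
      show "\<And>r. r \<in> {0..R} \<Longrightarrow> (U \<epsilon> has_real_derivative U' r) (at r within {0..R})" using U'1 by auto
      show "continuous_on {0..R} U'" "U' 0 = 0" "U' R = R * (A - B) / (\<epsilon>\<^sup>2 * real N * g R)"
        using U'2 U'3 U'4 by auto
      show "\<And>r. r \<in> {0<..<R} \<Longrightarrow> (U' has_real_derivative deriv (deriv (U \<epsilon>)) r) (at r)" by (rule U''d)
    next
      fix r :: real assume r: "r \<in> {0<..<R}"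
      have h: "\<epsilon>\<^sup>2 * g r * (deriv (deriv (U \<epsilon>)) r + ((real N - 1) / r + deriv g r / g r) * deriv (U \<epsilon>) r)
        = R ^ N / real N *
          (A * exp (p * U \<epsilon> r) / integral {0..R} (\<lambda>s. s ^ (N - 1) * exp (p * U \<epsilon> s))
           - B * exp (- q * U \<epsilon> r) / integral {0..R} (\<lambda>s. s ^ (N - 1) * exp (- q * U \<epsilon> s)))"
        using odeq r by blast
      show "\<epsilon>\<^sup>2 * g r * (deriv (deriv (U \<epsilon>)) r + ((real N - 1) / r + deriv g r / g r) * U' r)
        = R ^ N / real N *
          (A * exp (p * U \<epsilon> r) / integral {0..R} (\<lambda>s. s ^ (N - 1) * exp (p * U \<epsilon> s))
           - B * exp (- q * U \<epsilon> r) / integral {0..R} (\<lambda>s. s ^ (N - 1) * exp (- q * U \<epsilon> s)))"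
        using h unfolding dU[OF r] .
    qed
    note cx = gmax gmin L assms(9) assms(10) eps1 ek
    have Zeq: "I.Z0 gmin = Zc" unfolding Zc_def by (rule I.Z0_def[OF cx])
    have r1: "integral {\<epsilon> powr \<kappa>..R - \<epsilon> powr \<kappa>} (\<lambda>s. 1 / s * (deriv (U \<epsilon>) s)\<^sup>2)
         \<le> C1 * exp (- Mt / (2 * \<epsilon> powr (1 - \<kappa>)))"
      using I.est1[OF cx dU dl n] unfolding Zeq C1_def .
    have r2: "integral {R - \<epsilon> powr \<kappa>..R} (\<lambda>s. (deriv (U \<epsilon>) s)\<^sup>2) \<le> C2 / (Mt * \<epsilon> ^ 3)"
    proof -
      have "C2 / (Mt * \<epsilon> ^ 3) = Zc\<^sup>2 / (2 * L * \<epsilon> ^ 3)" unfolding C2_def using Mt0 L eps by (simp add: field_simps)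
      then show ?thesis using I.est2[OF cx dU] unfolding Zeq by simp
    qed
    have r3: "\<bar>\<epsilon>\<^sup>2 / 2 * integral {0..R}
          (\<lambda>s. ((real N - 2) * g s + s * deriv g s) / R ^ N * s ^ (N - 1) * (deriv (U \<epsilon>) s)\<^sup>2)\<bar>
         \<le> C3 / \<epsilon>"
    proof -
      have "\<bar>\<epsilon>\<^sup>2 / 2 * integral {0..R} (\<lambda>s. w1 s * s ^ (N - 1) * (deriv (U \<epsilon>) s)\<^sup>2)\<bar> \<le> C3a / \<epsilon>"
        using I.estL1[OF cx dU w1c W1] unfolding Zeq C3a_def .
      also have "\<dots> \<le> C3 / \<epsilon>" unfolding C3_def using C3b0 eps by (intro divide_right_mono) auto
      finally show ?thesis unfolding w1_def .
    qed
    have r4: "\<bar>- \<epsilon>\<^sup>2 / 2 * g (\<epsilon> powr \<kappa>) * (deriv (U \<epsilon>) (\<epsilon> powr \<kappa>))\<^sup>2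
        + \<epsilon>\<^sup>2 / 2 * integral {\<epsilon> powr \<kappa>..R}
          (\<lambda>s. (2 * (real N - 1) * g s + s * deriv g s) / s * (deriv (U \<epsilon>) s)\<^sup>2)\<bar>
         \<le> C3 / \<epsilon>"
    proof -
      have "\<bar>- \<epsilon>\<^sup>2 / 2 * g (\<epsilon> powr \<kappa>) * (deriv (U \<epsilon>) (\<epsilon> powr \<kappa>))\<^sup>2
        + \<epsilon>\<^sup>2 / 2 * integral {\<epsilon> powr \<kappa>..R} (\<lambda>s. w2 s / s * (deriv (U \<epsilon>) s)\<^sup>2)\<bar> \<le> C3b / \<epsilon>"
        using I.estL2[OF cx dU w2c W2] unfolding Zeq C3b_def .
      also have "\<dots> \<le> C3 / \<epsilon>" unfolding C3_def using C3a0 eps by (intro divide_right_mono) auto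
      finally show ?thesis unfolding w2_def .
    qed
    show ?thesis using r1 r2 r3 r4 by blast
  qed
  have ev: "\<forall>\<^sub>F \<epsilon> in at_right 0. integral {\<epsilon> powr \<kappa>..R - \<epsilon> powr \<kappa>} (\<lambda>s. 1 / s * (deriv (U \<epsilon>) s)\<^sup>2)
         \<le> C1 * exp (- Mt / (2 * \<epsilon> powr (1 - \<kappa>)))
     \<and> integral {R - \<epsilon> powr \<kappa>..R} (\<lambda>s. (deriv (U \<epsilon>) s)\<^sup>2) \<le> C2 / (Mt * \<epsilon> ^ 3)
     \<and> \<bar>\<epsilon>\<^sup>2 / 2 * integral {0..R}
          (\<lambda>s. ((real N - 2) * g s + s * deriv g s) / R ^ N * s ^ (N - 1) * (deriv (U \<epsilon>) s)\<^sup>2)\<bar>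
         \<le> C3 / \<epsilon>
     \<and> \<bar>- \<epsilon>\<^sup>2 / 2 * g (\<epsilon> powr \<kappa>) * (deriv (U \<epsilon>) (\<epsilon> powr \<kappa>))\<^sup>2
        + \<epsilon>\<^sup>2 / 2 * integral {\<epsilon> powr \<kappa>..R}
          (\<lambda>s. (2 * (real N - 1) * g s + s * deriv g s) / s * (deriv (U \<epsilon>) s)\<^sup>2)\<bar>
         \<le> C3 / \<epsilon>"
    unfolding eventually_at_right_field using per e00 by (intro exI[of _ e0]) auto
  show ?thesis using C1 C2 C3 ev by blast
qed


end
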